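(* Let $\mathcal{H},\mathcal{K}$ be complex Hilbert spaces, let $A,B,D\in\mathcal{B}(\mathcal{H})$ be positive selfadjoint operators, and let $\Phi:\mathcal{B}(\mathcal{H})\to\mathcal{B}(\mathcal{K})$ be a normalized positive linear map. Let $g:[0,\infty)\to\mathbb{R}$ be continuous with $g(0)=0$. If $g$ is convex (resp. concave), then for every $x\in\mathcal{K}$ with $\|x\|=1$, \begin{align*} &\Big\langle\Phi\Big(\tfrac{g(A)+g(B)+g(D)}{3}\Big)x,x\Big\rangle+g\Big(\Big\langle\Phi\Big(\tfrac{A+B+D}{3}\Big)x,x\Big\rangle\Big)\\ &\ge(\text{resp. }\le)\ \frac{2}{3}\Big[g\Big(\Big\langle\Phi\Big(\tfrac{A+B}{2}\Big)x,x\Big\rangle\Big)+g\Big(\Big\langle\Phi\Big(\tfrac{B+D}{2}\Big)x,x\Big\rangle\Big)+g\Big(\Big\langle\Phi\Big(\tfrac{A+D}{2}\Big)x,x\Big\rangle\Big)\Big]. \end{align*}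
   Context: A linear map $\Phi$ is positive if it maps positive operators to positive operators, and normalized if $\Phi(1_{\mathcal{H}})=1_{\mathcal{K}}$. Functions of selfadjoint operators are defined by the continuous functional calculus. *)

theory Defs
  imports "HOL-Analysis.Analysis" "HOL-Computational_Algebra.Polynomial"
begin

text \<open>Complex Hilbert spaces: a real Banach space equipped with a complex scalar
multiplication and a complex inner product (linear in the first argument) inducing the norm.\<close>

class chilbert = banach +
  fixes cscale :: "complex \<Rightarrow> 'a \<Rightarrow> 'a"
    and cinner :: "'a \<Rightarrow> 'a \<Rightarrow> complex"
  assumes cscale_of_real: "cscale (of_real r) x = scaleR r x"
    and cscale_add_left: "cscale (a + b) x = cscale a x + cscale b x"
    and cscale_add_right: "cscale a (x + y) = cscale a x + cscale a y"
    and cscale_assoc: "cscale a (cscale b x) = cscale (a * b) x"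
    and cinner_add_left: "cinner (x + y) z = cinner x z + cinner y z"
    and cinner_cscale_left: "cinner (cscale c x) y = c * cinner x y"
    and cinner_commute: "cinner y x = cnj (cinner x y)"
    and cinner_norm: "cinner x x = complex_of_real ((norm x)\<^sup>2)"

definition bounded_clinear :: "('a::chilbert \<Rightarrow> 'b::chilbert) \<Rightarrow> bool" where
  "bounded_clinear T \<longleftrightarrow> bounded_linear T \<and> (\<forall>c x. T (cscale c x) = cscale c (T x))"

definition selfadjoint_op :: "('a::chilbert \<Rightarrow> 'a) \<Rightarrow> bool" where
  "selfadjoint_op T \<longleftrightarrow> (\<forall>x y. cinner (T x) y = cinner x (T y))"

definition pos_op :: "('a::chilbert \<Rightarrow> 'a) \<Rightarrow> bool" where
  "pos_op T \<longleftrightarrow> bounded_clinear T \<and> selfadjoint_op T \<and> (\<forall>x. 0 \<le> Re (cinner (T x) x))"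

definition normalized_positive_map :: "(('a::chilbert \<Rightarrow> 'a) \<Rightarrow> ('b::chilbert \<Rightarrow> 'b)) \<Rightarrow> bool" where
  "normalized_positive_map \<Phi> \<longleftrightarrow>
     (\<forall>S. bounded_clinear S \<longrightarrow> bounded_clinear (\<Phi> S)) \<and>
     (\<forall>S T. bounded_clinear S \<longrightarrow> bounded_clinear T \<longrightarrow>
        \<Phi> (\<lambda>y. S y + T y) = (\<lambda>y. \<Phi> S y + \<Phi> T y)) \<and>
     (\<forall>c S. bounded_clinear S \<longrightarrow> \<Phi> (\<lambda>y. cscale c (S y)) = (\<lambda>y. cscale c (\<Phi> S y))) \<and>
     (\<forall>S. pos_op S \<longrightarrow> pos_op (\<Phi> S)) \<and>
     \<Phi> id = id"

definition poly_op :: "real poly \<Rightarrow> ('a::chilbert \<Rightarrow> 'a) \<Rightarrow> 'a \<Rightarrow> 'a" where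
  "poly_op p A = (\<lambda>x. \<Sum>i\<le>degree p. scaleR (coeff p i) ((A ^^ i) x))"

text \<open>Continuous functional calculus for a positive operator A (spectrum contained in
[0, norm A]): g(A) is the operator-norm limit of p_n(A) for any sequence of real polynomials
p_n converging uniformly to g on [0, norm A].\<close>
definition cfc :: "(real \<Rightarrow> real) \<Rightarrow> ('a::chilbert \<Rightarrow> 'a) \<Rightarrow> 'a \<Rightarrow> 'a" where
  "cfc g A = (THE T. bounded_clinear T \<and>
     (\<forall>p :: nat \<Rightarrow> real poly.
        uniform_limit {0..onorm A} (\<lambda>n t. poly (p n) t) g sequentially \<longrightarrow>
        (\<lambda>n. onorm (\<lambda>x. poly_op (p n) A x - T x)) \<longlonglongrightarrow> 0))"

end

theory Submission
  imports Defs "HOL-Computational_Algebra.Fundamental_Theorem_Algebra"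
begin

lemma cinner_zero_left[simp]: "cinner 0 y = 0"
  using cinner_add_left[of 0 0 y] by simp

lemma cinner_minus_left: "cinner (- x) y = - cinner x y"
proof -
  have "cinner x y + cinner (-x) y = 0" using cinner_add_left[of x "-x" y] by simp
  then show ?thesis by (simp add: add_eq_0_iff)
qed

lemma cinner_diff_left: "cinner (x - y) z = cinner x z - cinner y z"
  using cinner_add_left[of x "-y" z] by (simp add: cinner_minus_left)

lemma cinner_scaleR_left: "cinner (r *\<^sub>R x) y = of_real r * cinner x y"
  by (metis cinner_cscale_left cscale_of_real)

lemma cinner_add_right: "cinner x (y + z) = cinner x y + cinner x z"
  by (metis cinner_add_left cinner_commute complex_cnj_add)

lemma cinner_diff_right: "cinner x (y - z) = cinner x y - cinner x z"
  by (metis cinner_diff_left cinner_commute complex_cnj_diff)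

lemma cinner_zero_right[simp]: "cinner x 0 = 0"
  by (metis cinner_commute cinner_zero_left complex_cnj_zero)

lemma cinner_minus_right: "cinner x (- y) = - cinner x y"
  using cinner_diff_right[of x 0 y] by simp

lemma cinner_scaleR_right: "cinner x (r *\<^sub>R y) = of_real r * cinner x y"
  by (metis cinner_commute cinner_scaleR_left complex_cnj_mult complex_cnj_complex_of_real)

lemma cinner_cscale_right: "cinner x (cscale c y) = cnj c * cinner x y"
  by (metis cinner_commute cinner_cscale_left complex_cnj_mult)

lemma cinner_sum_left: "cinner (sum f A) y = (\<Sum>i\<in>A. cinner (f i) y)"
  by (induction A rule: infinite_finite_induct) (auto simp: cinner_add_left)

lemma cinner_sum_right: "cinner y (sum f A) = (\<Sum>i\<in>A. cinner y (f i))"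
  by (induction A rule: infinite_finite_induct) (auto simp: cinner_add_right)

lemma Re_cinner_self: "Re (cinner x x) = (norm x)\<^sup>2"
  by (simp add: cinner_norm)

lemma Re_cinner_commute: "Re (cinner y x) = Re (cinner x y)"
  by (subst cinner_commute) simp

lemma norm_add_sq: "(norm (x + y))\<^sup>2 = (norm x)\<^sup>2 + 2 * Re (cinner x y) + (norm y)\<^sup>2"
proof -
  have "(norm (x + y))\<^sup>2 = Re (cinner (x+y) (x+y))" by (simp add: Re_cinner_self)
  also have "\<dots> = Re (cinner x x) + Re (cinner x y) + Re (cinner y x) + Re (cinner y y)"
    by (simp add: cinner_add_left cinner_add_right)
  finally show ?thesis by (simp add: Re_cinner_self Re_cinner_commute[of y x])
qed

lemma Re_cinner_le: "Re (cinner x y) \<le> norm x * norm y"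
proof -
  have "(norm (x + y))\<^sup>2 \<le> (norm x + norm y)\<^sup>2"
    using norm_triangle_ineq[of x y] by (simp add: power_mono)
  then show ?thesis using norm_add_sq[of x y] by (simp add: power2_eq_square algebra_simps)
qed

lemma abs_Re_cinner_le: "\<bar>Re (cinner x y)\<bar> \<le> norm x * norm y"
  using Re_cinner_le[of x y] Re_cinner_le[of "-x" y] by (simp add: cinner_minus_left abs_le_iff)

lemma cscale_zero_right[simp]: "cscale c 0 = 0"
  using cscale_add_right[of c 0 0] by simp

lemma cscale_minus_right: "cscale c (- x) = - cscale c x"
proof -
  have "cscale c x + cscale c (-x) = 0" using cscale_add_right[of c x "-x"] by simp
  then show ?thesis by (simp add: add_eq_0_iff)
qed

lemma cscale_diff_right: "cscale c (x - y) = cscale c x - cscale c y"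
  using cscale_add_right[of c x "-y"] by (simp add: cscale_minus_right)

lemma cscale_scaleR: "cscale c (r *\<^sub>R x) = r *\<^sub>R cscale c x"
  by (metis cscale_assoc cscale_of_real mult.commute)

lemma cscale_sum: "cscale c (sum f A) = (\<Sum>i\<in>A. cscale c (f i))"
  by (induction A rule: infinite_finite_induct) (auto simp: cscale_add_right)

lemma norm_cscale: "norm (cscale c x) = cmod c * norm x"
proof -
  have "complex_of_real ((norm (cscale c x))\<^sup>2) = c * cnj c * complex_of_real ((norm x)\<^sup>2)"
    by (metis cinner_norm cinner_cscale_left cinner_cscale_right mult.assoc)
  also have "\<dots> = complex_of_real ((cmod c * norm x)\<^sup>2)"
    by (simp only: complex_mult_cnj power_mult_distrib of_real_mult cmod_power2)
  finally have "(norm (cscale c x))\<^sup>2 = (cmod c * norm x)\<^sup>2" using of_real_eq_iff by blast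
  then show ?thesis by (simp add: power2_eq_iff_nonneg)
qed

lemma bounded_linear_cscale: "bounded_linear (cscale c)"
proof
  show "cscale c (x + y) = cscale c x + cscale c y" for x y by (rule cscale_add_right)
  show "cscale c (r *\<^sub>R x) = r *\<^sub>R cscale c x" for r x by (rule cscale_scaleR)
  show "\<exists>K. \<forall>x. norm (cscale c x) \<le> norm x * K"
    by (rule exI[of _ "cmod c"]) (simp add: norm_cscale mult.commute)
qed

lemma bounded_linear_cinner_left: "bounded_linear (\<lambda>v. cinner v y)"
proof
  show "cinner (x + z) y = cinner x y + cinner z y" for x z by (rule cinner_add_left)
  show "cinner (r *\<^sub>R x) y = r *\<^sub>R cinner x y" for r x by (simp add: cinner_scaleR_left scaleR_conv_of_real)
  have "cmod (cinner v y) \<le> norm v * (2 * norm y)" for v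
  proof -
    have "\<bar>Re (cinner v y)\<bar> \<le> norm v * norm y" by (rule abs_Re_cinner_le)
    moreover have "\<bar>Re (cinner (cscale (-\<i>) v) y)\<bar> \<le> norm v * norm y"
      using abs_Re_cinner_le[of "cscale (-\<i>) v" y] by (simp add: norm_cscale)
    moreover have "Re (cinner (cscale (-\<i>) v) y) = Im (cinner v y)"
      by (simp add: cinner_cscale_left)
    ultimately show ?thesis using cmod_le[of "cinner v y"] by linarith
  qed
  then show "\<exists>K. \<forall>x. cmod (cinner x y) \<le> norm x * K" by blast
qed

lemma poly_op_upto:
  assumes "degree p \<le> N"
  shows "poly_op p A x = (\<Sum>i\<le>N. coeff p i *\<^sub>R (A ^^ i) x)"
  unfolding poly_op_def
  by (rule sum.mono_neutral_left) (use assms in \<open>auto simp: coeff_eq_0\<close>)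

lemma funpow_Suc_apply: "(f ^^ Suc n) x = f ((f ^^ n) x)"
  by simp

lemma poly_op_zero[simp]: "poly_op 0 A x = 0"
  by (simp add: poly_op_def)

lemma poly_op_add: "poly_op (p + q) A x = poly_op p A x + poly_op q A x"
proof -
  define N where "N = max (degree p) (degree q)"
  have "poly_op (p + q) A x = (\<Sum>i\<le>N. coeff (p+q) i *\<^sub>R (A ^^ i) x)"
    by (rule poly_op_upto) (simp add: N_def degree_add_le)
  also have "\<dots> = (\<Sum>i\<le>N. coeff p i *\<^sub>R (A ^^ i) x) + (\<Sum>i\<le>N. coeff q i *\<^sub>R (A ^^ i) x)"
    by (simp add: scaleR_add_left sum.distrib)
  also have "\<dots> = poly_op p A x + poly_op q A x"
    using poly_op_upto[of p N A x] poly_op_upto[of q N A x] by (simp add: N_def)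
  finally show ?thesis .
qed

lemma poly_op_smult: "poly_op (smult c p) A x = c *\<^sub>R poly_op p A x"
proof -
  have "poly_op (smult c p) A x = (\<Sum>i\<le>degree p. coeff (smult c p) i *\<^sub>R (A ^^ i) x)"
    by (rule poly_op_upto) (simp add: degree_smult_le)
  also have "\<dots> = c *\<^sub>R poly_op p A x"
    by (simp add: poly_op_def scaleR_sum_right)
  finally show ?thesis .
qed

lemma poly_op_minus: "poly_op (- p) A x = - poly_op p A x"
  using poly_op_smult[of "-1" p A x] by simp

lemma poly_op_diff: "poly_op (p - q) A x = poly_op p A x - poly_op q A x"
  using poly_op_add[of p "-q" A x] by (simp add: poly_op_minus)

lemma poly_op_const: "poly_op [:c:] A x = c *\<^sub>R x"
  by (simp add: poly_op_def)

lemma poly_op_pCons: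
  assumes "linear A"
  shows "poly_op (pCons a p) A x = a *\<^sub>R x + A (poly_op p A x)"
proof -
  have "poly_op (pCons a p) A x = (\<Sum>i\<le>Suc (degree p). coeff (pCons a p) i *\<^sub>R (A ^^ i) x)"
    by (rule poly_op_upto) (simp add: degree_pCons_le)
  also have "\<dots> = a *\<^sub>R x + (\<Sum>i\<le>degree p. coeff p i *\<^sub>R A ((A ^^ i) x))"
    by (subst sum.atMost_Suc_shift) (simp only: funpow_Suc_apply, simp)
  also have "(\<Sum>i\<le>degree p. coeff p i *\<^sub>R A ((A ^^ i) x)) = A (poly_op p A x)"
    by (simp add: poly_op_def linear_sum[OF assms] linear_scale[OF assms])
  finally show ?thesis .
qed

lemma poly_op_mult:
  assumes "linear A"
  shows "poly_op (p * q) A x = poly_op p A (poly_op q A x)"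
proof (induction p arbitrary: x)
  case 0
  then show ?case by simp
next
  case (pCons a p)
  have "poly_op (pCons a p * q) A x = poly_op (smult a q + pCons 0 (p * q)) A x"
    by (simp add: mult_pCons_left)
  also have "\<dots> = a *\<^sub>R poly_op q A x + A (poly_op p A (poly_op q A x))"
    by (simp add: poly_op_add poly_op_smult poly_op_pCons[OF assms] pCons.IH)
  also have "\<dots> = poly_op (pCons a p) A (poly_op q A x)"
    by (simp add: poly_op_pCons[OF assms])
  finally show ?case .
qed

lemma poly_op_X: "linear A \<Longrightarrow> poly_op [:0, 1:] A x = A x"
  by (simp add: poly_op_pCons poly_op_const)

lemma poly_op_commute:
  assumes "linear A"
  shows "poly_op p A (poly_op q A x) = poly_op q A (poly_op p A x)"
  by (metis assms mult.commute poly_op_mult)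

lemma poly_op_commute_A:
  assumes "linear A"
  shows "poly_op p A (A x) = A (poly_op p A x)"
  using poly_op_commute[OF assms, of p "[:0,1:]" x] by (simp add: poly_op_X[OF assms])

lemma bounded_linear_funpow: "bounded_linear (A::'a::real_normed_vector \<Rightarrow> 'a) \<Longrightarrow> bounded_linear (A ^^ n)"
  by (induction n) (auto simp: id_def comp_def intro: bounded_linear_compose[of A])

lemma bounded_linear_poly_op:
  assumes "bounded_linear A"
  shows "bounded_linear (poly_op p A)"
proof -
  have "bounded_linear (\<lambda>x. \<Sum>i\<le>degree p. coeff p i *\<^sub>R (A ^^ i) x)"
    by (intro bounded_linear_sum bounded_linear_compose[OF bounded_linear_scaleR_right]
      bounded_linear_funpow assms)
  then show ?thesis by (simp add: poly_op_def[abs_def])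
qed

lemma funpow_cscale:
  fixes A :: "'a::chilbert \<Rightarrow> 'a"
  assumes "\<And>c y. A (cscale c y) = cscale c (A y)"
  shows "(A ^^ n) (cscale c y) = cscale c ((A ^^ n) y)"
  by (induction n) (auto simp: assms funpow_Suc_apply)

lemma poly_op_cscale:
  assumes "\<And>c y. A (cscale c y) = cscale c (A y)"
  shows "poly_op p A (cscale c y) = cscale c (poly_op p A y)"
  by (simp add: poly_op_def funpow_cscale[OF assms] cscale_sum cscale_scaleR)

lemma bounded_clinear_poly_op:
  "bounded_clinear A \<Longrightarrow> bounded_clinear (poly_op p A)"
  unfolding bounded_clinear_def using bounded_linear_poly_op poly_op_cscale by blast

lemma selfadjoint_poly_op:
  assumes "bounded_linear A" "selfadjoint_op A"
  shows "cinner (poly_op p A x) y = cinner x (poly_op p A y)"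
proof -
  have lin: "linear A" using assms(1) bounded_linear.linear by blast
  show ?thesis
  proof (induction p arbitrary: x y)
    case 0
    then show ?case by simp
  next
    case (pCons a p)
    have "cinner (poly_op (pCons a p) A x) y = of_real a * cinner x y + cinner (poly_op p A x) (A y)"
      using assms(2) by (simp add: poly_op_pCons[OF lin] cinner_add_left cinner_scaleR_left selfadjoint_op_def)
    also have "\<dots> = of_real a * cinner x y + cinner x (A (poly_op p A y))"
      by (simp add: pCons.IH poly_op_commute_A[OF lin])
    also have "\<dots> = cinner x (poly_op (pCons a p) A y)"
      by (simp add: poly_op_pCons[OF lin] cinner_add_right cinner_scaleR_right)
    finally show ?case .
  qed
qed

abbreviation cpoly :: "real poly \<Rightarrow> complex poly" where "cpoly \<equiv> map_poly complex_of_real"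

lemma cpoly_add: "cpoly (p + q) = cpoly p + cpoly q"
  by (intro poly_eqI) (simp add: coeff_map_poly)

lemma cpoly_mult: "cpoly (p * q) = cpoly p * cpoly q"
  by (intro poly_eqI) (simp add: coeff_map_poly coeff_mult)

lemma poly_cpoly_real: "poly (cpoly p) (of_real x) = of_real (poly p x)"
  by (induction p) (auto simp: map_poly_pCons)

lemma real_poly_factor:
  fixes p :: "real poly"
  assumes "degree p > 0"
  shows "(\<exists>r. poly p r = 0) \<or> (\<exists>a b. b \<noteq> 0 \<and> [:a\<^sup>2 + b\<^sup>2, -2*a, 1:] dvd p)"
proof -
  have dm: "degree (cpoly p) = degree p" by (simp add: degree_map_poly)
  have "\<not> (\<exists>a l. a \<noteq> 0 \<and> l = 0 \<and> cpoly p = pCons a l)"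
  proof
    assume "\<exists>a l. a \<noteq> 0 \<and> l = 0 \<and> cpoly p = pCons a l"
    then have "degree (cpoly p) = 0" by auto
    with dm assms show False by simp
  qed
  then obtain z where z: "poly (cpoly p) z = 0" using fundamental_theorem_of_algebra_alt by blast
  show ?thesis
  proof (cases "Im z = 0")
    case True
    then have "z = of_real (Re z)" by (simp add: complex_eq_iff)
    then have "poly p (Re z) = 0" using z poly_cpoly_real[of p "Re z"] by simp
    then show ?thesis by blast
  next
    case False
    define a where "a = Re z"
    define b where "b = Im z"
    define Q where "Q = [:a\<^sup>2 + b\<^sup>2, -2*a, 1:]"
    have Q0: "Q \<noteq> 0" by (simp add: Q_def)
    have dQ: "degree Q = 2" by (simp add: Q_def)
    have Qz: "poly (cpoly Q) z = 0"
      by (simp add: Q_def map_poly_pCons a_def b_def complex_eq_iff power2_eq_square algebra_simps)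
    define r where "r = p mod Q"
    have pe: "p = p div Q * Q + r" by (simp add: r_def)
    have "poly (cpoly p) z = poly (cpoly (p div Q)) z * poly (cpoly Q) z + poly (cpoly r) z"
      by (subst pe) (simp add: cpoly_add cpoly_mult)
    then have rz: "poly (cpoly r) z = 0" using z Qz by simp
    have dr: "degree r \<le> 1"
      using degree_mod_less[OF Q0, of p] dQ by (auto simp: r_def)
    have "poly (cpoly r) z = (\<Sum>i\<le>1. coeff (cpoly r) i * z ^ i)"
      unfolding poly_altdef
      by (rule sum.mono_neutral_left) (use dr in \<open>auto simp: coeff_eq_0 degree_map_poly\<close>)
    also have "\<dots> = of_real (coeff r 0) + of_real (coeff r 1) * z"
      by (simp add: coeff_map_poly)
    finally have "of_real (coeff r 0) + of_real (coeff r 1) * z = 0" using rz by simp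
    then have c1: "coeff r 1 * b = 0" and "coeff r 0 + coeff r 1 * a = 0"
      by (auto simp: complex_eq_iff a_def b_def)
    then have "coeff r 1 = 0" "coeff r 0 = 0" using False b_def by auto
    then have "r = 0"
    proof (intro poly_eqI)
      fix n
      show "coeff r n = coeff 0 n"
      proof (cases "n \<le> 1")
        case True
        then have "n = 0 \<or> n = 1" by auto
        then show ?thesis using \<open>coeff r 1 = 0\<close> \<open>coeff r 0 = 0\<close> by auto
      next
        case False
        then show ?thesis using dr by (simp add: coeff_eq_0)
      qed
    qed
    then have "Q dvd p" using pe by (metis add.right_neutral dvd_triv_right)
    then show ?thesis using False b_def Q_def by blast
  qed
qed

definition bbelow :: "('a::chilbert \<Rightarrow> 'a) \<Rightarrow> bool" where
  "bbelow T \<longleftrightarrow> (\<exists>d>0. \<forall>x. d * norm x \<le> norm (T x))"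

lemma bbelow_form:
  assumes d: "d > 0" and h: "\<And>x. d * (norm x)\<^sup>2 \<le> Re (cinner (T x) x)"
  shows "bbelow T"
  unfolding bbelow_def
proof (intro exI[of _ d] conjI allI d)
  fix x
  show "d * norm x \<le> norm (T x)"
  proof (cases "x = 0")
    case True then show ?thesis by simp
  next
    case False
    then have nx: "norm x > 0" by simp
    have "(d * norm x) * norm x \<le> norm (T x) * norm x"
      using h[of x] Re_cinner_le[of "T x" x] by (simp add: power2_eq_square mult.assoc)
    then show ?thesis using nx by simp
  qed
qed

lemma bbelow_comp: "bbelow S \<Longrightarrow> bbelow T \<Longrightarrow> bbelow (\<lambda>x. S (T x))"
  unfolding bbelow_def
proof (elim exE conjE)
  fix d1 d2
  assume d1: "d1 > 0" "\<forall>x. d1 * norm x \<le> norm (S x)" and d2: "d2 > 0" "\<forall>x. d2 * norm x \<le> norm (T x)"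
  have "d1 * d2 * norm x \<le> norm (S (T x))" for x
  proof -
    have "d1 * (d2 * norm x) \<le> d1 * norm (T x)" using d1(1) d2(2) by (simp add: mult_left_mono)
    also have "\<dots> \<le> norm (S (T x))" using d1(2) by simp
    finally show ?thesis by (simp add: mult.assoc)
  qed
  then show "\<exists>d>0. \<forall>x. d * norm x \<le> norm (S (T x))" using d1(1) d2(1) by (intro exI[of _ "d1*d2"]) auto
qed

lemma bbelow_neg: "bbelow T \<Longrightarrow> bbelow (\<lambda>x. - T x)"
  by (simp add: bbelow_def)

lemma pos_opD:
  assumes "pos_op A"
  shows "bounded_linear A" "linear A" "selfadjoint_op A" "\<And>x. 0 \<le> Re (cinner (A x) x)"
    "\<And>x. Re (cinner (A x) x) \<le> onorm A * (norm x)\<^sup>2"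
    "\<And>c x. A (cscale c x) = cscale c (A x)"
proof -
  show bl: "bounded_linear A" using assms by (simp add: pos_op_def bounded_clinear_def)
  then show "linear A" by (rule bounded_linear.linear)
  show "selfadjoint_op A" "\<And>x. 0 \<le> Re (cinner (A x) x)" "\<And>c x. A (cscale c x) = cscale c (A x)"
    using assms by (auto simp: pos_op_def bounded_clinear_def)
  fix x
  have "Re (cinner (A x) x) \<le> norm (A x) * norm x" by (rule Re_cinner_le)
  also have "\<dots> \<le> onorm A * norm x * norm x" using onorm[OF bl, of x] by (simp add: mult_right_mono)
  finally show "Re (cinner (A x) x) \<le> onorm A * (norm x)\<^sup>2" by (simp add: power2_eq_square mult.assoc)
qed

lemma bb_const: "k > 0 \<Longrightarrow> bbelow (poly_op [:k:] A)"
  by (rule bbelow_form[of k]) (simp_all add: poly_op_const cinner_scaleR_left Re_cinner_self)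

lemma bb_lin_neg:
  assumes "pos_op A" "r < 0"
  shows "bbelow (poly_op [:-r, 1:] A)"
proof (rule bbelow_form[of "-r"])
  fix x
  have lin: "linear A" using pos_opD(2)[OF assms(1)] .
  have e: "poly_op [:-r, 1:] A x = A x - r *\<^sub>R x"
    by (simp add: poly_op_pCons[OF lin] poly_op_const linear_0[OF lin])
  have "Re (cinner (poly_op [:-r, 1:] A x) x) = Re (cinner (A x) x) - r * (norm x)\<^sup>2"
    unfolding e by (simp add: cinner_diff_left cinner_scaleR_left Re_cinner_self)
  then show "- r * (norm x)\<^sup>2 \<le> Re (cinner (poly_op [:- r, 1:] A x) x)"
    using pos_opD(4)[OF assms(1), of x] by simp
qed (use assms in auto)

lemma bb_lin_big:
  assumes "pos_op A" "onorm A < r"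
  shows "bbelow (poly_op [:r, -1:] A)"
proof (rule bbelow_form[of "r - onorm A"])
  fix x
  have lin: "linear A" using pos_opD(2)[OF assms(1)] .
  have e: "poly_op [:r, -1:] A x = r *\<^sub>R x - A x"
    by (simp add: poly_op_pCons[OF lin] poly_op_const linear_neg[OF lin] linear_0[OF lin])
  have "Re (cinner (poly_op [:r, -1:] A x) x) = r * (norm x)\<^sup>2 - Re (cinner (A x) x)"
    unfolding e by (simp add: cinner_diff_left cinner_scaleR_left Re_cinner_self)
  then show "(r - onorm A) * (norm x)\<^sup>2 \<le> Re (cinner (poly_op [:r, -1:] A x) x)"
    using pos_opD(5)[OF assms(1), of x] by (simp add: algebra_simps)
qed (use assms in auto)

lemma bb_quad:
  assumes "pos_op A" "b \<noteq> 0"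
  shows "bbelow (poly_op [:a\<^sup>2 + b\<^sup>2, -2*a, 1:] A)"
proof (rule bbelow_form[of "b\<^sup>2"])
  fix x
  have lin: "linear A" using pos_opD(2)[OF assms(1)] .
  define L where "L = poly_op [:-a, 1:] A"
  have eq: "[:a\<^sup>2 + b\<^sup>2, -2*a, 1:] = [:-a, 1:] * [:-a, 1:] + [:b\<^sup>2:]"
    by (simp add: power2_eq_square algebra_simps)
  have "poly_op [:a\<^sup>2 + b\<^sup>2, -2*a, 1:] A x = poly_op ([:-a, 1:] * [:-a, 1:] + [:b\<^sup>2:]) A x"
    by (subst eq) (rule refl)
  also have "\<dots> = L (L x) + b\<^sup>2 *\<^sub>R x"
    by (simp only: poly_op_add poly_op_mult[OF lin] poly_op_const L_def)
  finally have "poly_op [:a\<^sup>2 + b\<^sup>2, -2*a, 1:] A x = L (L x) + b\<^sup>2 *\<^sub>R x" .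
  moreover have "cinner (L (L x)) x = cinner (L x) (L x)"
    unfolding L_def by (rule selfadjoint_poly_op[OF pos_opD(1,3)[OF assms(1)]])
  then have "Re (cinner (L (L x)) x) = (norm (L x))\<^sup>2" by (simp add: Re_cinner_self)
  ultimately show "b\<^sup>2 * (norm x)\<^sup>2 \<le> Re (cinner (poly_op [:a\<^sup>2 + b\<^sup>2, -2*a, 1:] A x) x)"
    by (simp add: cinner_add_left cinner_scaleR_left Re_cinner_self)
qed (use assms in auto)

lemma bbelow_poly_op:
  assumes A: "pos_op A" and pos: "\<And>t. 0 \<le> t \<Longrightarrow> t \<le> onorm A \<Longrightarrow> poly p t > 0"
  shows "bbelow (poly_op p A)"
  using pos
proof (induction "degree p" arbitrary: p rule: less_induct)
  case less
  have lin: "linear A" using pos_opD(2)[OF A] .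
  have c0: "0 \<le> onorm A" using onorm_pos_le pos_opD(1)[OF A] by blast
  show ?case
  proof (cases "degree p = 0")
    case True
    then obtain k where pk: "p = [:k:]" by (metis degree_eq_zeroE)
    then have "k > 0" using less.prems[of 0] c0 by simp
    then show ?thesis using pk bb_const by blast
  next
    case False
    then have "degree p > 0" by simp
    from real_poly_factor[OF this] show ?thesis
    proof (elim disjE exE conjE)
      fix r assume r: "poly p r = 0"
      then have "[:-r, 1:] dvd p" by (simp add: poly_eq_0_iff_dvd)
      then obtain s where ps: "p = [:-r, 1:] * s" by (elim dvdE)
      have s0: "s \<noteq> 0" using False ps by auto
      have "degree ([:-r, 1:] * s) = 1 + degree s" by (subst degree_mult_eq) (use s0 in auto)
      then have ds: "degree s < degree p" using ps by simp
      have rout: "r < 0 \<or> onorm A < r" using r less.prems[of r] by force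
      then show ?thesis
      proof
        assume "r < 0"
        have "poly s t > 0" if "0 \<le> t" "t \<le> onorm A" for t
        proof -
          have "poly p t = poly [:-r, 1:] t * poly s t" using ps by (simp only: poly_mult)
          then have "poly p t = (t - r) * poly s t" by simp
          then show ?thesis using less.prems[OF that] \<open>r < 0\<close> that by (simp add: zero_less_mult_iff)
        qed
        then have "bbelow (poly_op s A)" using less.hyps[OF ds] by blast
        moreover have "poly_op p A = (\<lambda>x. poly_op [:-r, 1:] A (poly_op s A x))"
          by (rule ext) (simp only: ps poly_op_mult[OF lin])
        ultimately show ?thesis using bbelow_comp[OF bb_lin_neg[OF A \<open>r < 0\<close>]] by simp
      next
        assume rb: "onorm A < r"
        have "poly (-s) t > 0" if "0 \<le> t" "t \<le> onorm A" for t
        proof -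
          have "poly p t = poly [:-r, 1:] t * poly s t" using ps by (simp only: poly_mult)
          then have "poly p t = (r - t) * poly (-s) t" by (simp add: algebra_simps)
          moreover have "r - t > 0" using rb that by simp
          ultimately show ?thesis using less.prems[OF that] by (metis zero_less_mult_pos)
        qed
        then have "bbelow (poly_op (-s) A)" using less.hyps[of "-s"] ds by simp
        moreover have "poly_op p A = (\<lambda>x. poly_op [:r, -1:] A (poly_op (-s) A x))"
        proof -
          have "p = [:r, -1:] * (-s)" using ps by simp
          then show ?thesis by (intro ext) (simp only: poly_op_mult[OF lin])
        qed
        ultimately show ?thesis using bbelow_comp[OF bb_lin_big[OF A rb]] by simp
      qed
    next
      fix a b :: real
      assume b: "b \<noteq> 0" and "[:a\<^sup>2 + b\<^sup>2, -2*a, 1:] dvd p"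
      then obtain s where ps: "p = [:a\<^sup>2 + b\<^sup>2, -2*a, 1:] * s" by (elim dvdE)
      have s0: "s \<noteq> 0" using False ps by auto
      have "degree ([:a\<^sup>2 + b\<^sup>2, -2*a, 1:] * s) = 2 + degree s" by (subst degree_mult_eq) (use s0 in auto)
      then have ds: "degree s < degree p" using ps by simp
      have Qpos: "poly [:a\<^sup>2 + b\<^sup>2, -2*a, 1:] t > 0" for t
      proof -
        have "poly [:a\<^sup>2 + b\<^sup>2, -2*a, 1:] t = (t - a)\<^sup>2 + b\<^sup>2"
          by (simp add: power2_eq_square algebra_simps)
        moreover have "(t - a)\<^sup>2 + b\<^sup>2 > 0" using b by (simp add: add_nonneg_pos)
        ultimately show ?thesis by linarith
      qed
      have "poly s t > 0" if "0 \<le> t" "t \<le> onorm A" for t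
      proof -
        have "poly p t = poly [:a\<^sup>2 + b\<^sup>2, -2*a, 1:] t * poly s t" using ps by (simp only: poly_mult)
        then show ?thesis using less.prems[OF that] Qpos[of t] by (simp add: zero_less_mult_iff)
      qed
      then have "bbelow (poly_op s A)" using less.hyps[OF ds] by blast
      moreover have "poly_op p A = (\<lambda>x. poly_op [:a\<^sup>2 + b\<^sup>2, -2*a, 1:] A (poly_op s A x))"
        by (rule ext) (simp only: ps poly_op_mult[OF lin])
      ultimately show ?thesis using bbelow_comp[OF bb_quad[OF A b]] by simp
    qed
  qed
qed

lemma Re_cinner_scale_self:
  assumes "linear T"
  shows "Re (cinner (T (k *\<^sub>R x)) (k *\<^sub>R x)) = k\<^sup>2 * Re (cinner (T x) x)"
  by (simp add: linear_scale[OF assms] cinner_scaleR_left cinner_scaleR_right power2_eq_square)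

lemma poly_identity:
  fixes p :: "real poly"
  shows "p * ([:M:] - p) * p + ([:M:] - p) * p * ([:M:] - p) = smult M (p * ([:M:] - p))"
proof -
  have "p * ([:M:] - p) * p + ([:M:] - p) * p * ([:M:] - p) = (p * ([:M:] - p)) * (p + ([:M:] - p))"
    by (simp add: algebra_simps)
  also have "\<dots> = (p * ([:M:] - p)) * [:M:]" by simp
  finally show ?thesis by simp
qed

lemma pos_poly_op:
  assumes A: "pos_op A" and nonneg: "\<And>t. 0 \<le> t \<Longrightarrow> t \<le> onorm A \<Longrightarrow> poly p t \<ge> 0"
  shows "0 \<le> Re (cinner (poly_op p A x0) x0)"
proof (rule ccontr)
  assume neg: "\<not> 0 \<le> Re (cinner (poly_op p A x0) x0)"
  have lin: "linear A" and blA: "bounded_linear A" and saA: "selfadjoint_op A"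
    using pos_opD[OF A] by auto
  define T where "T = poly_op p A"
  have blT: "bounded_linear T" unfolding T_def by (rule bounded_linear_poly_op[OF blA])
  have linT: "linear T" using blT bounded_linear.linear by blast
  have x0: "x0 \<noteq> 0" using neg by auto
  define V where "V = {Re (cinner (T u) u) | u. norm u = 1}"
  have Vlow: "- onorm T \<le> v" if "v \<in> V" for v
  proof -
    from that obtain u where u: "norm u = 1" "v = Re (cinner (T u) u)" by (auto simp: V_def)
    have "\<bar>v\<bar> \<le> norm (T u) * norm u" using abs_Re_cinner_le[of "T u" u] u by simp
    also have "\<dots> \<le> onorm T" using onorm[OF blT, of u] u by simp
    finally show ?thesis by simp
  qed
  then have bddV: "bdd_below V" by (auto simp: bdd_below_def)
  define u0 where "u0 = (1 / norm x0) *\<^sub>R x0"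
  have nu0: "norm u0 = 1" using x0 by (simp add: u0_def)
  have "Re (cinner (T u0) u0) = (1 / norm x0)\<^sup>2 * Re (cinner (T x0) x0)"
    unfolding u0_def by (rule Re_cinner_scale_self[OF linT])
  also have "\<dots> < 0" using neg x0 by (simp add: T_def mult_pos_neg)
  finally have u0neg: "Re (cinner (T u0) u0) < 0" .
  have u0V: "Re (cinner (T u0) u0) \<in> V" using nu0 by (auto simp: V_def)
  define m where "m = Inf V"
  have mneg: "m < 0" using cInf_lower[OF u0V bddV] u0neg by (simp add: m_def)
  have Tm: "m * (norm x)\<^sup>2 \<le> Re (cinner (T x) x)" for x
  proof (cases "x = 0")
    case True then show ?thesis by simp
  next
    case False
    define u where "u = (1 / norm x) *\<^sub>R x"
    have "norm u = 1" using False by (simp add: u_def)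
    then have "Re (cinner (T u) u) \<in> V" by (auto simp: V_def)
    then have "m \<le> Re (cinner (T u) u)" using cInf_lower[OF _ bddV] by (simp add: m_def)
    also have "Re (cinner (T u) u) = (1 / norm x)\<^sup>2 * Re (cinner (T x) x)"
      unfolding u_def by (rule Re_cinner_scale_self[OF linT])
    finally have "m * (norm x)\<^sup>2 \<le> (1 / norm x)\<^sup>2 * Re (cinner (T x) x) * (norm x)\<^sup>2"
      by (simp add: mult_right_mono)
    also have "\<dots> = Re (cinner (T x) x)" using False by (simp add: power2_eq_square field_simps)
    finally show ?thesis .
  qed
  define p' where "p' = p - [:m:]"
  define S where "S = poly_op p' A"
  have Sx: "S x = T x - m *\<^sub>R x" for x
    by (simp add: S_def p'_def T_def poly_op_diff poly_op_const)
  have blS: "bounded_linear S" unfolding S_def by (rule bounded_linear_poly_op[OF blA])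
  have saS: "cinner (S x) y = cinner x (S y)" for x y
    unfolding S_def by (rule selfadjoint_poly_op[OF blA saA])
  have "bbelow S" unfolding S_def
  proof (rule bbelow_poly_op[OF A])
    fix t assume "0 \<le> t" "t \<le> onorm A"
    then show "poly p' t > 0" using nonneg[of t] mneg by (simp add: p'_def)
  qed
  then obtain d where d: "d > 0" "\<And>x. d * norm x \<le> norm (S x)" by (auto simp: bbelow_def)
  have ReS: "Re (cinner (S x) x) = Re (cinner (T x) x) - m * (norm x)\<^sup>2" for x
    by (simp add: Sx cinner_diff_left cinner_scaleR_left Re_cinner_self)
  have Spos: "0 \<le> Re (cinner (S y) y)" for y using Tm[of y] ReS[of y] by simp
  define M where "M = onorm S"
  have M0: "0 \<le> M" unfolding M_def using onorm_pos_le[OF blS] .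
  have SM: "Re (cinner (S y) y) \<le> M * (norm y)\<^sup>2" for y
  proof -
    have "Re (cinner (S y) y) \<le> norm (S y) * norm y" by (rule Re_cinner_le)
    also have "\<dots> \<le> M * norm y * norm y" using onorm[OF blS, of y] by (simp add: M_def mult_right_mono)
    finally show ?thesis by (simp add: power2_eq_square mult.assoc)
  qed
  define W where "W = poly_op ([:M:] - p') A"
  have Wx: "W y = M *\<^sub>R y - S y" for y
    by (simp add: W_def S_def poly_op_diff poly_op_const)
  have Wpos: "0 \<le> Re (cinner (W y) y)" for y
    using SM[of y] by (simp add: Wx cinner_diff_left cinner_scaleR_left Re_cinner_self)
  have saW: "cinner (W x) y = cinner x (W y)" for x y
    unfolding W_def by (rule selfadjoint_poly_op[OF blA saA])
  have key: "(norm (S x))\<^sup>2 \<le> M * Re (cinner (S x) x)" for x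
  proof -
    define q where "q = p' * ([:M:] - p')"
    have e1: "poly_op (p' * ([:M:] - p') * p') A x = S (W (S x))"
      by (simp add: poly_op_mult[OF lin] S_def W_def)
    have e2: "poly_op (([:M:] - p') * p' * ([:M:] - p')) A x = W (S (W x))"
      by (simp add: poly_op_mult[OF lin] S_def W_def)
    have r1: "0 \<le> Re (cinner (S (W (S x))) x)"
      using Wpos[of "S x"] by (simp add: saS)
    have r2: "0 \<le> Re (cinner (W (S (W x))) x)"
      using Spos[of "W x"] by (simp add: saW)
    have "poly_op (smult M q) A x = S (W (S x)) + W (S (W x))"
      unfolding q_def by (simp only: poly_identity[symmetric] poly_op_add e1 e2)
    moreover have "poly_op (smult M q) A x = M *\<^sub>R S (W x)"
      by (simp add: poly_op_smult q_def poly_op_mult[OF lin] S_def W_def)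
    ultimately have "0 \<le> Re (cinner (M *\<^sub>R S (W x)) x)"
      using r1 r2 by (simp add: cinner_add_left)
    moreover have "S (W x) = M *\<^sub>R S x - S (S x)"
      by (simp add: Wx linear_diff[OF bounded_linear.linear[OF blS]] linear_scale[OF bounded_linear.linear[OF blS]])
    moreover have "cinner (S (S x)) x = cinner (S x) (S x)" by (rule saS)
    then have "Re (cinner (S (S x)) x) = (norm (S x))\<^sup>2" by (simp add: Re_cinner_self)
    ultimately have "0 \<le> M * (M * Re (cinner (S x) x) - (norm (S x))\<^sup>2)"
      by (simp add: cinner_scaleR_left cinner_diff_left)
    then show ?thesis
    proof (cases "M = 0")
      case True
      then have "norm (S x) \<le> 0" using onorm[OF blS, of x] by (simp add: M_def)
      then show ?thesis using True by simp
    next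
      case False
      then have "M > 0" using M0 by simp
      then show ?thesis using \<open>0 \<le> M * _\<close> by (simp add: zero_le_mult_iff)
    qed
  qed
  define e where "e = d\<^sup>2 / (M + 1)"
  have e0: "e > 0" using d M0 by (simp add: e_def)
  have "Inf V < m + e" using e0 by (simp add: m_def)
  then obtain v where "v \<in> V" "v < m + e"
    using cInf_lessD[of V "m + e"] u0V by blast
  then obtain u where u: "norm u = 1" "Re (cinner (T u) u) < m + e" by (auto simp: V_def)
  have "Re (cinner (S u) u) < e" using ReS[of u] u by simp
  then have "(norm (S u))\<^sup>2 \<le> M * e"
    using key[of u] M0 by (meson less_imp_le mult_left_mono order_trans)
  also have "M * e < d\<^sup>2" using d M0 by (simp add: e_def field_simps)
  finally have "(norm (S u))\<^sup>2 < d\<^sup>2" .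
  moreover have "d \<le> norm (S u)" using d(2)[of u] u by simp
  ultimately show False using d(1) by (meson not_less power_mono less_imp_le)
qed

lemma selfadj_norm_bound:
  assumes bl: "bounded_linear T" and sa: "\<And>x y. cinner (T x) y = cinner x (T y)"
    and K: "\<And>x. \<bar>Re (cinner (T x) x)\<bar> \<le> K * (norm x)\<^sup>2"
  shows "norm (T x) \<le> K * norm x"
proof (cases "T x = 0 \<or> x = 0")
  case True
  show ?thesis
  proof (cases "x = 0")
    case True
    then show ?thesis using linear_0[OF bounded_linear.linear[OF bl]] by simp
  next
    case False
    then have "0 < (norm x)\<^sup>2" by simp
    moreover have "0 \<le> K * (norm x)\<^sup>2" using K[of x] by (meson abs_ge_zero order_trans)
    ultimately have "0 \<le> K" by (simp add: zero_le_mult_iff)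
    then show ?thesis using \<open>T x = 0 \<or> x = 0\<close> False by auto
  qed
next
  case False
  have lin: "linear T" using bl bounded_linear.linear by blast
  define y where "y = (norm x / norm (T x)) *\<^sub>R T x"
  have ny: "norm y = norm x" using False by (simp add: y_def)
  have Rxy: "Re (cinner (T x) y) = norm x * norm (T x)"
    using False by (simp add: y_def cinner_scaleR_right Re_cinner_self power2_eq_square)
  have Ryx: "Re (cinner (T y) x) = Re (cinner (T x) y)"
    by (simp add: sa Re_cinner_commute[of x "T y"])
  have h1: "Re (cinner (T (x + y)) (x + y)) - Re (cinner (T (x - y)) (x - y)) = 4 * Re (cinner (T x) y)"
    using Ryx by (simp add: linear_add[OF lin] linear_diff[OF lin] cinner_add_left cinner_add_right
        cinner_diff_left cinner_diff_right)
  have h2: "Re (cinner (T (x + y)) (x + y)) - Re (cinner (T (x - y)) (x - y)) \<le> K * ((norm (x+y))\<^sup>2 + (norm (x-y))\<^sup>2)"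
    using K[of "x+y"] K[of "x-y"] by (simp add: abs_le_iff distrib_left)
  have h3: "(norm (x+y))\<^sup>2 + (norm (x-y))\<^sup>2 = 2 * (norm x)\<^sup>2 + 2 * (norm y)\<^sup>2"
    using norm_add_sq[of x y] norm_add_sq[of x "-y"] by (simp add: cinner_minus_right)
  have h4: "4 * Re (cinner (T x) y) \<le> K * (2 * (norm x)\<^sup>2 + 2 * (norm x)\<^sup>2)"
    using h2 unfolding h1 h3 ny .
  have "4 * (norm x * norm (T x)) \<le> 4 * (K * (norm x * norm x))"
    using h4 unfolding Rxy by (simp add: power2_eq_square algebra_simps)
  then have "norm x * norm (T x) \<le> norm x * (K * norm x)" by (simp add: algebra_simps)
  then show ?thesis using False by simp
qed

lemma poly_op_onorm:
  assumes A: "pos_op A" and bnd: "\<And>t. 0 \<le> t \<Longrightarrow> t \<le> onorm A \<Longrightarrow> \<bar>poly p t\<bar> \<le> e"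
  shows "onorm (poly_op p A) \<le> e"
proof -
  have blA: "bounded_linear A" and saA: "selfadjoint_op A" using pos_opD[OF A] by auto
  have "\<bar>poly p 0\<bar> \<le> e" using bnd[of 0] onorm_pos_le[OF blA] by simp
  then have e0: "0 \<le> e" by linarith
  show ?thesis
  proof (rule onorm_bound[OF e0])
    fix x0
    show "norm (poly_op p A x0) \<le> e * norm x0"
    proof (rule selfadj_norm_bound[OF bounded_linear_poly_op[OF blA]])
      show "cinner (poly_op p A x) y = cinner x (poly_op p A y)" for x y
        by (rule selfadjoint_poly_op[OF blA saA])
      fix x
      have "0 \<le> Re (cinner (poly_op ([:e:] - p) A x) x)"
        by (rule pos_poly_op[OF A]) (use bnd in \<open>force simp: abs_le_iff\<close>)
      moreover have "0 \<le> Re (cinner (poly_op ([:e:] + p) A x) x)"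
        by (rule pos_poly_op[OF A]) (use bnd in \<open>force simp: abs_le_iff\<close>)
      ultimately show "\<bar>Re (cinner (poly_op p A x) x)\<bar> \<le> e * (norm x)\<^sup>2"
        by (simp add: poly_op_add poly_op_diff poly_op_const cinner_add_left cinner_diff_left
            cinner_scaleR_left Re_cinner_self abs_le_iff)
    qed
  qed
qed

lemma weierstrass_poly_seq:
  assumes "continuous_on {0..c} (g :: real \<Rightarrow> real)"
  shows "\<exists>p :: nat \<Rightarrow> real poly. uniform_limit {0..c} (\<lambda>n t. poly (p n) t) g sequentially"
proof -
  have "\<exists>P :: real poly. \<forall>t\<in>{0..c}. \<bar>g t - poly P t\<bar> < 1 / (Suc n)" for n
  proof -
    obtain f where f: "real_polynomial_function f" "\<And>x. x \<in> {0..c} \<Longrightarrow> \<bar>g x - f x\<bar> < 1 / (Suc n)"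
      using Stone_Weierstrass_real_polynomial_function[OF compact_Icc assms, of "1 / Suc n"] by auto
    obtain a N where aN: "f = (\<lambda>x. \<Sum>i\<le>N. a i * x ^ i)"
      using f(1) real_polynomial_function_iff_sum by blast
    define P where "P = (\<Sum>i\<le>N. monom (a i) i)"
    have "poly P x = f x" for x by (simp add: P_def poly_sum poly_monom aN)
    then show ?thesis using f(2) by metis
  qed
  then obtain p where p: "\<And>n. \<forall>t\<in>{0..c}. \<bar>g t - poly (p n) t\<bar> < 1 / (Suc n)" by metis
  have "uniform_limit {0..c} (\<lambda>n t. poly (p n) t) g sequentially"
  proof (rule uniform_limitI)
    fix e :: real assume e: "e > 0"
    obtain N :: nat where N: "1 / Suc N < e" using e nat_approx_posE by blast
    show "\<forall>\<^sub>F n in sequentially. \<forall>x\<in>{0..c}. dist (poly (p n) x) (g x) < e"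
    proof (rule eventually_sequentiallyI[of N])
      fix n assume "N \<le> n"
      then have "1 / real (Suc n) \<le> 1 / Suc N" by (simp add: frac_le)
      then show "\<forall>x\<in>{0..c}. dist (poly (p n) x) (g x) < e"
        using p[of n] N by (force simp: dist_real_def abs_minus_commute)
    qed
  qed
  then show ?thesis by blast
qed

lemma poly_diff_lim:
  assumes A: "pos_op A"
    and p: "uniform_limit {0..onorm A} (\<lambda>n t. poly (p n) t) g sequentially"
    and q: "uniform_limit {0..onorm A} (\<lambda>n t. poly (q n) t) g sequentially"
  shows "(\<lambda>n. onorm (poly_op (p n - q n) A)) \<longlonglongrightarrow> 0"
proof (rule tendstoI)
  fix e :: real assume e: "e > 0"
  have "\<forall>\<^sub>F n in sequentially. \<forall>x\<in>{0..onorm A}. dist (poly (p n) x) (g x) < e/4"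
    using uniform_limit_iff[THEN iffD1, OF p, rule_format, of "e/4"] e by simp
  moreover have "\<forall>\<^sub>F n in sequentially. \<forall>x\<in>{0..onorm A}. dist (poly (q n) x) (g x) < e/4"
    using uniform_limit_iff[THEN iffD1, OF q, rule_format, of "e/4"] e by simp
  ultimately show "\<forall>\<^sub>F n in sequentially. dist (onorm (poly_op (p n - q n) A)) 0 < e"
  proof eventually_elim
    case (elim n)
    have "onorm (poly_op (p n - q n) A) \<le> e/2"
    proof (rule poly_op_onorm[OF A])
      fix t assume "0 \<le> t" "t \<le> onorm A"
      then have "\<bar>poly (p n) t - g t\<bar> < e/4" "\<bar>poly (q n) t - g t\<bar> < e/4"
        using elim by (auto simp: dist_real_def)
      then show "\<bar>poly (p n - q n) t\<bar> \<le> e/2" by (simp only: poly_diff)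
    qed
    moreover have "0 \<le> onorm (poly_op (p n - q n) A)"
      using onorm_pos_le[OF bounded_linear_poly_op[OF pos_opD(1)[OF A]]] .
    ultimately show ?case using e by simp
  qed
qed

lemma poly_op_diff_fun: "(\<lambda>x. poly_op p A x - poly_op q A x) = poly_op (p - q) A"
  by (simp add: fun_eq_iff poly_op_diff)

lemma ex_lim:
  assumes A: "pos_op A"
    and p: "uniform_limit {0..onorm A} (\<lambda>n t. poly (p n) t) g sequentially"
  shows "\<exists>T. bounded_linear T \<and> (\<lambda>n. onorm (\<lambda>x. poly_op (p n) A x - T x)) \<longlonglongrightarrow> 0"
proof -
  have blA: "bounded_linear A" using pos_opD(1)[OF A] .
  define L where "L n = Blinfun (poly_op (p n) A)" for n
  have La: "blinfun_apply (L n) = poly_op (p n) A" for n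
    unfolding L_def by (rule bounded_linear_Blinfun_apply[OF bounded_linear_poly_op[OF blA]])
  have nL: "norm (L m - L n) = onorm (poly_op (p m - p n) A)" for m n
    by (simp add: norm_blinfun.rep_eq minus_blinfun.rep_eq La poly_op_diff_fun)
  have "Cauchy L"
  proof (rule metric_CauchyI)
    fix e :: real assume e: "e > 0"
    have "\<forall>\<^sub>F n in sequentially. \<forall>x\<in>{0..onorm A}. dist (poly (p n) x) (g x) < e/4"
      using uniform_limit_iff[THEN iffD1, OF p, rule_format, of "e/4"] e by simp
    then obtain N where N0: "\<forall>n\<ge>N. \<forall>x\<in>{0..onorm A}. dist (poly (p n) x) (g x) < e/4"
      by (auto simp: eventually_sequentially)
    have N: "\<bar>poly (p n) t - g t\<bar> < e/4" if "n \<ge> N" "t \<in> {0..onorm A}" for n t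
      using N0 that by (auto simp: dist_real_def)
    show "\<exists>M. \<forall>m\<ge>M. \<forall>n\<ge>M. dist (L m) (L n) < e"
    proof (intro exI[of _ N] allI impI)
      fix m n assume "m \<ge> N" "n \<ge> N"
      have "onorm (poly_op (p m - p n) A) \<le> e/2"
      proof (rule poly_op_onorm[OF A])
        fix t assume "0 \<le> t" "t \<le> onorm A"
        then have "\<bar>poly (p m) t - g t\<bar> < e/4" "\<bar>poly (p n) t - g t\<bar> < e/4"
          using N \<open>m \<ge> N\<close> \<open>n \<ge> N\<close> by auto
        then show "\<bar>poly (p m - p n) t\<bar> \<le> e/2" by (simp only: poly_diff)
      qed
      then show "dist (L m) (L n) < e" using e by (simp add: dist_norm nL)
    qed
  qed
  then obtain B where B: "L \<longlonglongrightarrow> B" using Cauchy_convergent_iff convergent_def by blast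
  have "(\<lambda>n. norm (L n - B)) \<longlonglongrightarrow> 0"
    using B by (simp add: tendsto_norm_zero LIM_zero)
  moreover have "norm (L n - B) = onorm (\<lambda>x. poly_op (p n) A x - blinfun_apply B x)" for n
    by (simp add: norm_blinfun.rep_eq minus_blinfun.rep_eq La)
  ultimately show ?thesis using blinfun.bounded_linear_right by auto
qed

lemma lim_pointwise:
  assumes bl: "\<And>n. bounded_linear (P n)" "bounded_linear T"
    and lim: "(\<lambda>n. onorm (\<lambda>x. P n x - T x)) \<longlonglongrightarrow> 0"
  shows "(\<lambda>n. P n x) \<longlonglongrightarrow> T x"
proof -
  have l2: "(\<lambda>n. onorm (\<lambda>x. P n x - T x) * norm x) \<longlonglongrightarrow> 0"
    by (rule tendsto_mult_left_zero[OF lim])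
  have le: "\<forall>n. norm (P n x - T x) \<le> onorm (\<lambda>x. P n x - T x) * norm x"
    using onorm[OF bounded_linear_sub[OF bl(1) bl(2)]] by blast
  have "(\<lambda>n. P n x - T x) \<longlonglongrightarrow> 0"
    by (rule Lim_null_comparison[OF always_eventually[OF le] l2])
  then show ?thesis by (rule LIM_zero_cancel)
qed

lemma lim_clinear_sa:
  assumes A: "pos_op A" and T: "bounded_linear T"
    and lim: "(\<lambda>n. onorm (\<lambda>x. poly_op (p n) A x - T x)) \<longlonglongrightarrow> 0"
  shows "bounded_clinear T" "selfadjoint_op T"
proof -
  have blA: "bounded_linear A" and saA: "selfadjoint_op A" and cA: "\<And>c x. A (cscale c x) = cscale c (A x)"
    using pos_opD[OF A] by auto
  have pw: "(\<lambda>n. poly_op (p n) A x) \<longlonglongrightarrow> T x" for x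
    by (rule lim_pointwise[OF bounded_linear_poly_op[OF blA] T lim])
  have "T (cscale c x) = cscale c (T x)" for c x
  proof -
    have "(\<lambda>n. cscale c (poly_op (p n) A x)) \<longlonglongrightarrow> cscale c (T x)"
      by (rule bounded_linear.tendsto[OF bounded_linear_cscale pw])
    moreover have "(\<lambda>n. cscale c (poly_op (p n) A x)) \<longlonglongrightarrow> T (cscale c x)"
      using pw[of "cscale c x"] by (simp add: poly_op_cscale[OF cA])
    ultimately have "cscale c (T x) = T (cscale c x)" by (rule LIMSEQ_unique)
    then show ?thesis by simp
  qed
  then show "bounded_clinear T" using T by (simp add: bounded_clinear_def)
  have "cinner (T x) y = cinner x (T y)" for x y
  proof -
    have l1: "(\<lambda>n. cinner (poly_op (p n) A x) y) \<longlonglongrightarrow> cinner (T x) y"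
      by (rule bounded_linear.tendsto[OF bounded_linear_cinner_left pw])
    have "(\<lambda>n. cnj (cinner (poly_op (p n) A y) x)) \<longlonglongrightarrow> cnj (cinner (T y) x)"
      by (intro tendsto_cnj bounded_linear.tendsto[OF bounded_linear_cinner_left pw])
    moreover have "cnj (cinner (poly_op (p n) A y) x) = cinner (poly_op (p n) A x) y" for n
      using cinner_commute[of x "poly_op (p n) A y"] selfadjoint_poly_op[OF blA saA, of "p n" x y] by simp
    ultimately have "(\<lambda>n. cinner (poly_op (p n) A x) y) \<longlonglongrightarrow> cnj (cinner (T y) x)" by simp
    then have "cinner (T x) y = cnj (cinner (T y) x)"
      using LIMSEQ_unique \<open>(\<lambda>n. cinner (poly_op (p n) A x) y) \<longlonglongrightarrow> cinner (T x) y\<close> by blast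
    then show ?thesis using cinner_commute[of x "T y"] by simp
  qed
  then show "selfadjoint_op T" by (simp add: selfadjoint_op_def)
qed

lemma same_lim:
  assumes A: "pos_op A"
    and p: "uniform_limit {0..onorm A} (\<lambda>n t. poly (p n) t) g sequentially"
    and q: "uniform_limit {0..onorm A} (\<lambda>n t. poly (q n) t) g sequentially"
    and T: "bounded_linear T"
    and lim: "(\<lambda>n. onorm (\<lambda>x. poly_op (p n) A x - T x)) \<longlonglongrightarrow> 0"
  shows "(\<lambda>n. onorm (\<lambda>x. poly_op (q n) A x - T x)) \<longlonglongrightarrow> 0"
proof -
  have blA: "bounded_linear A" using pos_opD(1)[OF A] .
  have d: "(\<lambda>n. onorm (poly_op (q n - p n) A)) \<longlonglongrightarrow> 0" by (rule poly_diff_lim[OF A q p])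
  have le: "norm (onorm (\<lambda>x. poly_op (q n) A x - T x)) \<le> onorm (poly_op (q n - p n) A) + onorm (\<lambda>x. poly_op (p n) A x - T x)" for n
  proof -
    have "onorm (\<lambda>x. poly_op (q n) A x - T x) = onorm (\<lambda>x. poly_op (q n - p n) A x + (poly_op (p n) A x - T x))"
      by (simp add: poly_op_diff)
    also have "\<dots> \<le> onorm (poly_op (q n - p n) A) + onorm (\<lambda>x. poly_op (p n) A x - T x)"
      by (intro onorm_triangle bounded_linear_poly_op[OF blA] bounded_linear_sub T)
    finally show ?thesis
      using onorm_pos_le[OF bounded_linear_sub[OF bounded_linear_poly_op[OF blA] T, of "q n"]] by simp
  qed
  show ?thesis
    by (rule Lim_null_comparison[OF always_eventually[OF allI[OF le]]]) (use tendsto_add[OF d lim] in simp)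
qed

lemma cfc_eq:
  assumes A: "pos_op A" and g: "continuous_on {0..onorm A} g"
    and p: "uniform_limit {0..onorm A} (\<lambda>n t. poly (p n) t) g sequentially"
    and T: "bounded_linear T"
    and lim: "(\<lambda>n. onorm (\<lambda>x. poly_op (p n) A x - T x)) \<longlonglongrightarrow> 0"
  shows "cfc g A = T"
  unfolding cfc_def
proof (rule the_equality)
  have blA: "bounded_linear A" using pos_opD(1)[OF A] .
  show "bounded_clinear T \<and> (\<forall>q :: nat \<Rightarrow> real poly. uniform_limit {0..onorm A} (\<lambda>n t. poly (q n) t) g sequentially \<longrightarrow>
        (\<lambda>n. onorm (\<lambda>x. poly_op (q n) A x - T x)) \<longlonglongrightarrow> 0)"
    using lim_clinear_sa(1)[OF A T lim] same_lim[OF A p _ T lim] by blast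
  fix T1
  assume "bounded_clinear T1 \<and> (\<forall>q :: nat \<Rightarrow> real poly. uniform_limit {0..onorm A} (\<lambda>n t. poly (q n) t) g sequentially \<longrightarrow>
        (\<lambda>n. onorm (\<lambda>x. poly_op (q n) A x - T1 x)) \<longlonglongrightarrow> 0)"
  then have T1: "bounded_linear T1" and lim1: "(\<lambda>n. onorm (\<lambda>x. poly_op (p n) A x - T1 x)) \<longlonglongrightarrow> 0"
    using p by (auto simp: bounded_clinear_def)
  have le: "onorm (\<lambda>x. T1 x - T x) \<le> onorm (\<lambda>x. poly_op (p n) A x - T1 x) + onorm (\<lambda>x. poly_op (p n) A x - T x)" for n
  proof -
    have "onorm (\<lambda>x. T1 x - T x) = onorm (\<lambda>x. - (poly_op (p n) A x - T1 x) + (poly_op (p n) A x - T x))"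
      by simp
    also have "\<dots> \<le> onorm (\<lambda>x. - (poly_op (p n) A x - T1 x)) + onorm (\<lambda>x. poly_op (p n) A x - T x)"
      by (intro onorm_triangle bounded_linear_minus bounded_linear_poly_op[OF blA] bounded_linear_sub T T1)
    finally show ?thesis by (simp only: onorm_neg)
  qed
  have "onorm (\<lambda>x. T1 x - T x) \<le> 0"
    using LIMSEQ_le_const[OF tendsto_add[OF lim1 lim], of "onorm (\<lambda>x. T1 x - T x)"] le by auto
  then have "onorm (\<lambda>x. T1 x - T x) = 0"
    using onorm_pos_le[OF bounded_linear_sub[OF T1 T]] by simp
  then show "T1 = T" using onorm_eq_0[OF bounded_linear_sub[OF T1 T]] by (simp add: fun_eq_iff)
qed

lemma cfc_exists:
  assumes A: "pos_op A" and g: "continuous_on {0..onorm A} g"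
  obtains p where "uniform_limit {0..onorm A} (\<lambda>n t. poly (p n) t) g sequentially"
    "bounded_linear (cfc g A)" "(\<lambda>n. onorm (\<lambda>x. poly_op (p n) A x - cfc g A x)) \<longlonglongrightarrow> 0"
proof -
  obtain p where p: "uniform_limit {0..onorm A} (\<lambda>n t. poly (p n) t) g sequentially"
    using weierstrass_poly_seq[OF g] by blast
  obtain T where T: "bounded_linear T" "(\<lambda>n. onorm (\<lambda>x. poly_op (p n) A x - T x)) \<longlonglongrightarrow> 0"
    using ex_lim[OF A p] by blast
  have "cfc g A = T" by (rule cfc_eq[OF A g p T])
  then show ?thesis using that p T by simp
qed

lemma cfc_clinear_sa:
  assumes A: "pos_op A" and g: "continuous_on {0..onorm A} g"
  shows "bounded_clinear (cfc g A)" "selfadjoint_op (cfc g A)"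
proof -
  obtain p where "uniform_limit {0..onorm A} (\<lambda>n t. poly (p n) t) g sequentially"
    "bounded_linear (cfc g A)" "(\<lambda>n. onorm (\<lambda>x. poly_op (p n) A x - cfc g A x)) \<longlonglongrightarrow> 0"
    using cfc_exists[OF A g] by blast
  then show "bounded_clinear (cfc g A)" "selfadjoint_op (cfc g A)"
    using lim_clinear_sa[OF A] by blast+
qed

lemma cfc_uminus:
  assumes A: "pos_op A" and g: "continuous_on {0..onorm A} g"
  shows "cfc (\<lambda>t. - g t) A = (\<lambda>x. - cfc g A x)"
proof -
  obtain p where p: "uniform_limit {0..onorm A} (\<lambda>n t. poly (p n) t) g sequentially"
    and T: "bounded_linear (cfc g A)" and lim: "(\<lambda>n. onorm (\<lambda>x. poly_op (p n) A x - cfc g A x)) \<longlonglongrightarrow> 0"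
    using cfc_exists[OF A g] by blast
  have g': "continuous_on {0..onorm A} (\<lambda>t. - g t)" using g by (intro continuous_intros)
  have p': "uniform_limit {0..onorm A} (\<lambda>n t. poly (- p n) t) (\<lambda>t. - g t) sequentially"
    using p by (simp add: uniform_limit_iff dist_real_def abs_minus_commute)
  have "onorm (\<lambda>x. poly_op (- p n) A x - - cfc g A x) = onorm (\<lambda>x. poly_op (p n) A x - cfc g A x)" for n
  proof -
    have eq: "(\<lambda>x. poly_op (- p n) A x - - cfc g A x) = (\<lambda>x. - (poly_op (p n) A x - cfc g A x))"
      by (rule ext) (simp add: poly_op_minus)
    show ?thesis unfolding eq by (rule onorm_neg)
  qed
  then have lim': "(\<lambda>n. onorm (\<lambda>x. poly_op (- p n) A x - - cfc g A x)) \<longlonglongrightarrow> 0"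
    using lim by simp
  show ?thesis
    by (rule cfc_eq[OF A g' p' bounded_linear_minus[OF T] lim'])
qed

lemma cfc_lower:
  assumes A: "pos_op A" and g: "continuous_on {0..onorm A} g"
    and lb: "\<And>t. 0 \<le> t \<Longrightarrow> t \<le> onorm A \<Longrightarrow> a + b * t \<le> g t"
  shows "a * (norm y)\<^sup>2 + b * Re (cinner (A y) y) \<le> Re (cinner (cfc g A y) y)"
proof -
  obtain p where p: "uniform_limit {0..onorm A} (\<lambda>n t. poly (p n) t) g sequentially"
    and T: "bounded_linear (cfc g A)" and lim: "(\<lambda>n. onorm (\<lambda>x. poly_op (p n) A x - cfc g A x)) \<longlonglongrightarrow> 0"
    using cfc_exists[OF A g] by blast
  have blA: "bounded_linear A" and lin: "linear A" using pos_opD[OF A] by auto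
  have pw: "(\<lambda>n. poly_op (p n) A y) \<longlonglongrightarrow> cfc g A y"
    by (rule lim_pointwise[OF bounded_linear_poly_op[OF blA] T lim])
  have lR: "(\<lambda>n. Re (cinner (poly_op (p n) A y) y)) \<longlonglongrightarrow> Re (cinner (cfc g A y) y)"
    by (intro tendsto_Re bounded_linear.tendsto[OF bounded_linear_cinner_left pw])
  have lin_ab: "poly_op [:a, b:] A y = a *\<^sub>R y + b *\<^sub>R A y"
    by (simp add: poly_op_pCons[OF lin] poly_op_const linear_0[OF lin] linear_scale[OF lin])
  have main: "a * (norm y)\<^sup>2 + b * Re (cinner (A y) y) - e * (norm y)\<^sup>2 \<le> Re (cinner (cfc g A y) y)"
    if e: "e > 0" for e
  proof (rule LIMSEQ_le_const[OF lR])
    have "\<forall>\<^sub>F n in sequentially. \<forall>x\<in>{0..onorm A}. dist (poly (p n) x) (g x) < e"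
      using uniform_limit_iff[THEN iffD1, OF p, rule_format, of e] e by simp
    then obtain N where N: "\<forall>n\<ge>N. \<forall>x\<in>{0..onorm A}. dist (poly (p n) x) (g x) < e"
      by (auto simp: eventually_sequentially)
    show "\<exists>N. \<forall>n\<ge>N. a * (norm y)\<^sup>2 + b * Re (cinner (A y) y) - e * (norm y)\<^sup>2 \<le> Re (cinner (poly_op (p n) A y) y)"
    proof (intro exI[of _ N] allI impI)
      fix n assume n: "n \<ge> N"
      have "0 \<le> Re (cinner (poly_op (p n - [:a, b:] + [:e:]) A y) y)"
      proof (rule pos_poly_op[OF A])
        fix t assume t: "0 \<le> t" "t \<le> onorm A"
        then have "\<bar>poly (p n) t - g t\<bar> < e" using N n by (auto simp: dist_real_def)
        moreover have "a + b * t \<le> g t" using lb t by simp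
        moreover have "poly (p n - [:a, b:] + [:e:]) t = poly (p n) t - (a + b * t) + e" by simp
        ultimately show "0 \<le> poly (p n - [:a, b:] + [:e:]) t" by (simp only: abs_less_iff) linarith
      qed
      then show "a * (norm y)\<^sup>2 + b * Re (cinner (A y) y) - e * (norm y)\<^sup>2 \<le> Re (cinner (poly_op (p n) A y) y)"
        by (simp add: poly_op_add poly_op_diff lin_ab poly_op_const cinner_add_left cinner_diff_left
            cinner_scaleR_left Re_cinner_self)
    qed
  qed
  show ?thesis
  proof (rule field_le_epsilon)
    fix e :: real assume e: "e > 0"
    define e' where "e' = e / ((norm y)\<^sup>2 + 1)"
    have ny1: "(norm y)\<^sup>2 + 1 > 0" by (simp add: add_nonneg_pos)
    then have e': "e' > 0" using e by (simp add: e'_def)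
    have "e' * (norm y)\<^sup>2 \<le> e"
    proof -
      have "e' * (norm y)\<^sup>2 \<le> e' * ((norm y)\<^sup>2 + 1)" using e' by simp
      also have "\<dots> = e" using ny1 by (simp add: e'_def)
      finally show ?thesis .
    qed
    then show "a * (norm y)\<^sup>2 + b * Re (cinner (A y) y) \<le> Re (cinner (cfc g A y) y) + e"
      using main[OF e'] by simp
  qed
qed

lemma convex_comb:
  fixes g :: "real \<Rightarrow> real"
  assumes cv: "convex_on {0..} g" and "0 \<le> u" "0 \<le> v" "0 \<le> t" "t \<le> 1"
  shows "g ((1 - t) * u + t * v) \<le> (1 - t) * g u + t * g v"
  using convex_onD[OF cv, of t u v] assms by simp

lemma subgradient:
  fixes g :: "real \<Rightarrow> real"
  assumes cv: "convex_on {0..} g" and t0: "t0 > 0"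
  shows "\<exists>k. \<forall>t\<ge>0. g t0 + k * (t - t0) \<le> g t"
proof -
  define S where "S = {(g t0 - g s) / (t0 - s) | s. 0 \<le> s \<and> s < t0}"
  have three: "(g t0 - g s) / (t0 - s) \<le> (g u - g t0) / (u - t0)" if "0 \<le> s" "s < t0" "t0 < u" for s u
  proof -
    have "(g s - g t0) / (s - t0) \<le> (g s - g u) / (s - u)"
      using convex_on_slope_le(1)[OF cv, of s u t0] that by simp
    also have "\<dots> \<le> (g t0 - g u) / (t0 - u)"
      using convex_on_slope_le(2)[OF cv, of s u t0] that by simp
    also have "(g t0 - g u) / (t0 - u) = (g u - g t0) / (u - t0)"
      by (metis minus_diff_eq minus_divide_divide)
    finally show ?thesis by (metis minus_diff_eq minus_divide_divide)
  qed
  have Sne: "S \<noteq> {}" using t0 by (auto simp: S_def)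
  have Sbdd: "bdd_above S"
    unfolding bdd_above_def S_def using three[of _ "t0 + 1"] t0 by auto
  define k where "k = Sup S"
  have "g t0 + k * (t - t0) \<le> g t" if t: "t \<ge> 0" for t
  proof (cases t t0 rule: linorder_cases)
    case less
    then have "(g t0 - g t) / (t0 - t) \<in> S" using t by (auto simp: S_def)
    then have "(g t0 - g t) / (t0 - t) \<le> k" unfolding k_def using Sbdd by (rule cSup_upper)
    then have "g t0 - g t \<le> k * (t0 - t)" using less by (simp add: divide_le_eq)
    then show ?thesis by (simp add: algebra_simps)
  next
    case equal then show ?thesis by simp
  next
    case greater
    have "k \<le> (g t - g t0) / (t - t0)"
      unfolding k_def using Sne by (rule cSup_least) (use three greater in \<open>auto simp: S_def\<close>)
    then have "k * (t - t0) \<le> g t - g t0" using greater by (simp add: le_divide_eq)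
    then show ?thesis by simp
  qed
  then show ?thesis by blast
qed

lemma popoviciu_aux:
  fixes g :: "real \<Rightarrow> real"
  assumes cv: "convex_on {0..} g" and nn: "0 \<le> x" "0 \<le> y" "0 \<le> z"
    and side: "(s \<le> y \<and> s \<le> z) \<or> (y \<le> s \<and> z \<le> s)"
    and s: "s = (x + y + z) / 3"
  shows "2 * (g ((x+y)/2) + g ((y+z)/2) + g ((x+z)/2)) \<le> g x + g y + g z + 3 * g s"
proof (cases "x = s")
  case True
  then have "y = s" "z = s" using side s by auto
  then show ?thesis using True by simp
next
  case False
  have s0: "0 \<le> s" using nn s by simp
  define be where "be = (y - s) / (2 * (s - x))"
  define ga where "ga = (z - s) / (2 * (s - x))"
  have sx: "s - x \<noteq> 0" using False by simp
  have be0: "0 \<le> be" and ga0: "0 \<le> ga"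
  proof -
    have "x = 3 * s - y - z" using s by simp
    then have "(s \<le> y \<and> s \<le> z \<and> x \<le> s) \<or> (y \<le> s \<and> z \<le> s \<and> s \<le> x)" using side by auto
    then show "0 \<le> be" "0 \<le> ga" by (auto simp: be_def ga_def zero_le_divide_iff)
  qed
  have bega: "be + ga = 1/2"
  proof -
    have "be + ga = (y + z - 2 * s) / (2 * (s - x))" by (simp add: be_def ga_def add_divide_distrib[symmetric])
    also have "y + z - 2 * s = s - x" using s by simp
    finally show ?thesis using sx by simp
  qed
  have be1: "be \<le> 1" and ga1: "ga \<le> 1" using bega be0 ga0 by auto
  have e1: "(x + z) / 2 = (1 - be) * s + be * x"
  proof -
    have h: "be * (s - x) = (y - s) / 2" using sx by (simp add: be_def field_simps)
    have a: "(1 - be) * s + be * x = s - be * (s - x)" by (simp add: algebra_simps)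
    show ?thesis unfolding a h using s by (simp add: field_simps)
  qed
  have e2: "(x + y) / 2 = (1 - ga) * s + ga * x"
  proof -
    have h: "ga * (s - x) = (z - s) / 2" using sx by (simp add: ga_def field_simps)
    have a: "(1 - ga) * s + ga * x = s - ga * (s - x)" by (simp add: algebra_simps)
    show ?thesis unfolding a h using s by (simp add: field_simps)
  qed
  have c0: "g ((y + z) / 2) \<le> (1 - 1/2) * g y + 1/2 * g z"
    using convex_comb[OF cv nn(2) nn(3), of "1/2"] by (simp add: algebra_simps add_divide_distrib)
  have c1: "g ((x + z) / 2) \<le> (1 - be) * g s + be * g x"
    unfolding e1 by (rule convex_comb[OF cv s0 nn(1) be0 be1])
  have c2: "g ((x + y) / 2) \<le> (1 - ga) * g s + ga * g x"
    unfolding e2 by (rule convex_comb[OF cv s0 nn(1) ga0 ga1])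
  have "2 * (g ((x+y)/2) + g ((y+z)/2) + g ((x+z)/2)) \<le>
        2 * ((1 - ga) * g s + ga * g x + ((1 - 1/2) * g y + 1/2 * g z) + ((1 - be) * g s + be * g x))"
    using c0 c1 c2 by simp
  also have "\<dots> = g y + g z + 2 * (be + ga) * g x + (4 - 2 * (be + ga)) * g s"
    by (simp add: algebra_simps)
  also have "\<dots> = g x + g y + g z + 3 * g s" unfolding bega by simp
  finally show ?thesis .
qed

lemma popoviciu:
  fixes g :: "real \<Rightarrow> real"
  assumes cv: "convex_on {0..} g" and nn: "0 \<le> x" "0 \<le> y" "0 \<le> z"
  shows "2 * (g ((x+y)/2) + g ((y+z)/2) + g ((x+z)/2)) \<le> g x + g y + g z + 3 * g ((x + y + z) / 3)"
proof -
  define s where "s = (x + y + z) / 3"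
  consider "(s \<le> y \<and> s \<le> z) \<or> (y \<le> s \<and> z \<le> s)" | "(s \<le> x \<and> s \<le> z) \<or> (x \<le> s \<and> z \<le> s)"
    | "(s \<le> x \<and> s \<le> y) \<or> (x \<le> s \<and> y \<le> s)" by linarith
  then show ?thesis
  proof cases
    case 1
    from popoviciu_aux[OF cv nn 1 s_def] show ?thesis by (simp add: s_def)
  next
    case 2
    from popoviciu_aux[OF cv nn(2) nn(1) nn(3) 2, of] show ?thesis
      by (simp add: s_def algebra_simps)
  next
    case 3
    from popoviciu_aux[OF cv nn(3) nn(1) nn(2) 3, of] show ?thesis
      by (simp add: s_def algebra_simps)
  qed
qed

lemma bc_add: "bounded_clinear S \<Longrightarrow> bounded_clinear T \<Longrightarrow> bounded_clinear (\<lambda>y. S y + T y)"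
  by (auto simp: bounded_clinear_def cscale_add_right intro: bounded_linear_add)

lemma bc_scaleR: "bounded_clinear S \<Longrightarrow> bounded_clinear (\<lambda>y. r *\<^sub>R S y)"
  by (auto simp: bounded_clinear_def cscale_scaleR intro: bounded_linear_scaleR_right bounded_linear_compose[OF bounded_linear_scaleR_right])

lemma bc_id: "bounded_clinear (\<lambda>y. y)"
  by (simp add: bounded_clinear_def bounded_linear_ident[unfolded id_def])

lemma npmD:
  assumes "normalized_positive_map \<Phi>"
  shows "\<And>S. bounded_clinear S \<Longrightarrow> bounded_clinear (\<Phi> S)"
    "\<And>S T. bounded_clinear S \<Longrightarrow> bounded_clinear T \<Longrightarrow> \<Phi> (\<lambda>y. S y + T y) = (\<lambda>y. \<Phi> S y + \<Phi> T y)"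
    "\<And>c S. bounded_clinear S \<Longrightarrow> \<Phi> (\<lambda>y. cscale c (S y)) = (\<lambda>y. cscale c (\<Phi> S y))"
    "\<And>S. pos_op S \<Longrightarrow> pos_op (\<Phi> S)"
    "\<Phi> (\<lambda>y. y) = (\<lambda>y. y)"
  using assms unfolding normalized_positive_map_def id_def by blast+

lemma Phi_scaleR:
  assumes "normalized_positive_map \<Phi>" "bounded_clinear S"
  shows "\<Phi> (\<lambda>y. r *\<^sub>R S y) = (\<lambda>y. r *\<^sub>R \<Phi> S y)"
  using npmD(3)[OF assms, of "of_real r"] by (simp add: cscale_of_real)

lemma phi_add:
  assumes "normalized_positive_map \<Phi>" "bounded_clinear S" "bounded_clinear T"
  shows "Re (cinner (\<Phi> (\<lambda>y. S y + T y) x) x) = Re (cinner (\<Phi> S x) x) + Re (cinner (\<Phi> T x) x)"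
  by (simp add: npmD(2)[OF assms] cinner_add_left)

lemma phi_scaleR:
  assumes "normalized_positive_map \<Phi>" "bounded_clinear S"
  shows "Re (cinner (\<Phi> (\<lambda>y. r *\<^sub>R S y) x) x) = r * Re (cinner (\<Phi> S x) x)"
  by (simp add: Phi_scaleR[OF assms] cinner_scaleR_left)

lemma phi_id:
  assumes "normalized_positive_map \<Phi>" "norm x = 1"
  shows "Re (cinner (\<Phi> (\<lambda>y. y) x) x) = 1"
  using assms by (simp add: npmD(5)[OF assms(1)] Re_cinner_self)

lemma phi_pos:
  assumes "normalized_positive_map \<Phi>" "pos_op S"
  shows "0 \<le> Re (cinner (\<Phi> S x) x)"
  using npmD(4)[OF assms] by (simp add: pos_op_def)

lemma phi2:
  assumes "normalized_positive_map \<Phi>" "bounded_clinear S" "bounded_clinear T"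
  shows "Re (cinner (\<Phi> (\<lambda>y. r *\<^sub>R (S y + T y)) x) x) = r * (Re (cinner (\<Phi> S x) x) + Re (cinner (\<Phi> T x) x))"
  using phi_scaleR[OF assms(1) bc_add[OF assms(2,3)], of r x] phi_add[OF assms, of x] by simp

lemma phi3:
  assumes "normalized_positive_map \<Phi>" "bounded_clinear S" "bounded_clinear T" "bounded_clinear U"
  shows "Re (cinner (\<Phi> (\<lambda>y. r *\<^sub>R (S y + T y + U y)) x) x) =
    r * (Re (cinner (\<Phi> S x) x) + Re (cinner (\<Phi> T x) x) + Re (cinner (\<Phi> U x) x))"
  using phi_scaleR[OF assms(1) bc_add[OF bc_add[OF assms(2,3)] assms(4)], of r x]
    phi_add[OF assms(1) bc_add[OF assms(2,3)] assms(4), of x] phi_add[OF assms(1,2,3), of x] by simp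

lemma jensen:
  assumes A: "pos_op A" and npm: "normalized_positive_map \<Phi>"
    and gc: "continuous_on {0..} g" and cv: "convex_on {0..} g" and g0: "g 0 = 0"
    and x: "norm x = 1"
  shows "g (Re (cinner (\<Phi> A x) x)) \<le> Re (cinner (\<Phi> (cfc g A) x) x)"
proof -
  define t0 where "t0 = Re (cinner (\<Phi> A x) x)"
  define T where "T = cfc g A"
  have gc': "continuous_on {0..onorm A} g" using gc by (rule continuous_on_subset) auto
  have bcT: "bounded_clinear T" and saT: "selfadjoint_op T"
    using cfc_clinear_sa[OF A gc'] by (auto simp: T_def)
  have bcA: "bounded_clinear A" and saA: "selfadjoint_op A" using A by (auto simp: pos_op_def)
  have lb: "a + b * t0 \<le> Re (cinner (\<Phi> T x) x)" if ab: "\<And>t. 0 \<le> t \<Longrightarrow> a + b * t \<le> g t" for a b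
  proof -
    define U where "U = (\<lambda>y. T y + ((-a) *\<^sub>R y + (-b) *\<^sub>R A y))"
    have bcU: "bounded_clinear U"
      unfolding U_def by (intro bc_add bcT bc_scaleR bc_id bcA)
    have "cinner (U y) z = cinner y (U z)" for y z
      using saT saA by (simp add: selfadjoint_op_def U_def cinner_add_left cinner_add_right
          cinner_scaleR_left cinner_scaleR_right cinner_diff_left cinner_diff_right
          cinner_minus_left cinner_minus_right)
    then have saU: "selfadjoint_op U" by (simp add: selfadjoint_op_def)
    have "0 \<le> Re (cinner (U y) y)" for y
    proof -
      have "a * (norm y)\<^sup>2 + b * Re (cinner (A y) y) \<le> Re (cinner (T y) y)"
        unfolding T_def by (rule cfc_lower[OF A gc']) (use ab in auto)
      then show ?thesis
        by (simp add: U_def cinner_add_left cinner_scaleR_left Re_cinner_self cinner_diff_left cinner_minus_left)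
    qed
    then have "pos_op U" using bcU saU by (simp add: pos_op_def)
    then have "0 \<le> Re (cinner (\<Phi> U x) x)" by (rule phi_pos[OF npm])
    moreover have "Re (cinner (\<Phi> U x) x) = Re (cinner (\<Phi> T x) x) + ((-a) * 1 + (-b) * t0)"
    proof -
      have e1: "Re (cinner (\<Phi> U x) x) = Re (cinner (\<Phi> T x) x) + Re (cinner (\<Phi> (\<lambda>y. (-a) *\<^sub>R y + (-b) *\<^sub>R A y) x) x)"
        unfolding U_def by (rule phi_add[OF npm bcT bc_add[OF bc_scaleR[OF bc_id] bc_scaleR[OF bcA]]])
      have e2: "Re (cinner (\<Phi> (\<lambda>y. (-a) *\<^sub>R y + (-b) *\<^sub>R A y) x) x) =
          Re (cinner (\<Phi> (\<lambda>y. (-a) *\<^sub>R y) x) x) + Re (cinner (\<Phi> (\<lambda>y. (-b) *\<^sub>R A y) x) x)"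
        by (rule phi_add[OF npm bc_scaleR[OF bc_id] bc_scaleR[OF bcA]])
      have e3: "Re (cinner (\<Phi> (\<lambda>y. (-a) *\<^sub>R y) x) x) = (-a) * Re (cinner (\<Phi> (\<lambda>y. y) x) x)"
        by (rule phi_scaleR[OF npm bc_id])
      have e4: "Re (cinner (\<Phi> (\<lambda>y. (-b) *\<^sub>R A y) x) x) = (-b) * Re (cinner (\<Phi> A x) x)"
        by (rule phi_scaleR[OF npm bcA])
      show ?thesis unfolding e1 e2 e3 e4 phi_id[OF npm x] t0_def ..
    qed
    ultimately show ?thesis by simp
  qed
  have t0pos: "0 \<le> t0" unfolding t0_def by (rule phi_pos[OF npm A])
  show ?thesis
  proof (cases "t0 > 0")
    case True
    obtain k where k: "\<And>t. t \<ge> 0 \<Longrightarrow> g t0 + k * (t - t0) \<le> g t"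
      using subgradient[OF cv True] by blast
    have "(g t0 - k * t0) + k * t0 \<le> Re (cinner (\<Phi> T x) x)"
      by (rule lb) (use k in \<open>simp add: algebra_simps\<close>)
    then show ?thesis by (simp add: t0_def T_def)
  next
    case False
    then have t00: "t0 = 0" using t0pos by simp
    show ?thesis
    proof (rule ccontr)
      assume "\<not> ?thesis"
      then have neg: "Re (cinner (\<Phi> T x) x) < 0" using t00 g0 by (simp add: t0_def T_def)
      define e where "e = - Re (cinner (\<Phi> T x) x) / 3"
      have e: "e > 0" using neg by (simp add: e_def)
      obtain d where d: "d > 0" "\<And>s. s \<in> {0..} \<Longrightarrow> dist s 0 < d \<Longrightarrow> dist (g s) (g 0) < e"
        using gc e unfolding continuous_on_iff by (metis atLeast_iff order_refl)
      define s where "s = d / 4"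
      have s: "s > 0" using d by (simp add: s_def)
      have gs: "\<bar>g s\<bar> < e" using d(2)[of s] s d(1) g0 by (simp add: s_def dist_real_def)
      have g2s: "\<bar>g (2 * s)\<bar> < e" using d(2)[of "2 * s"] s d(1) g0 by (simp add: s_def dist_real_def)
      obtain k where k: "\<And>t. t \<ge> 0 \<Longrightarrow> g s + k * (t - s) \<le> g t"
        using subgradient[OF cv s] by blast
      have "(g s - k * s) + k * t0 \<le> Re (cinner (\<Phi> T x) x)"
        by (rule lb) (use k in \<open>simp add: algebra_simps\<close>)
      moreover have "g s + k * s \<le> g (2 * s)" using k[of "2 * s"] s by (simp add: algebra_simps)
      ultimately show False using gs g2s t00 by (simp add: e_def abs_less_iff)
    qed
  qed
qed

lemma aux3: "2 * m \<le> c + 3 * G \<Longrightarrow> (2/3) * m \<le> c / 3 + (G::real)"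
  by simp

lemma main_convex:
  assumes A: "pos_op A" and B: "pos_op B" and D: "pos_op D" and npm: "normalized_positive_map \<Phi>"
    and gc: "continuous_on {0..} g" and cv: "convex_on {0..} g" and g0: "g 0 = 0"
    and x: "norm x = 1"
  shows "(2/3) * (g ((Re (cinner (\<Phi> A x) x) + Re (cinner (\<Phi> B x) x)) / 2)
                 + g ((Re (cinner (\<Phi> B x) x) + Re (cinner (\<Phi> D x) x)) / 2)
                 + g ((Re (cinner (\<Phi> A x) x) + Re (cinner (\<Phi> D x) x)) / 2))
    \<le> (Re (cinner (\<Phi> (cfc g A) x) x) + Re (cinner (\<Phi> (cfc g B) x) x) + Re (cinner (\<Phi> (cfc g D) x) x)) / 3
      + g ((Re (cinner (\<Phi> A x) x) + Re (cinner (\<Phi> B x) x) + Re (cinner (\<Phi> D x) x)) / 3)"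
proof -
  have p: "2 * (g ((Re (cinner (\<Phi> A x) x) + Re (cinner (\<Phi> B x) x)) / 2)
                 + g ((Re (cinner (\<Phi> B x) x) + Re (cinner (\<Phi> D x) x)) / 2)
                 + g ((Re (cinner (\<Phi> A x) x) + Re (cinner (\<Phi> D x) x)) / 2))
    \<le> g (Re (cinner (\<Phi> A x) x)) + g (Re (cinner (\<Phi> B x) x)) + g (Re (cinner (\<Phi> D x) x))
      + 3 * g ((Re (cinner (\<Phi> A x) x) + Re (cinner (\<Phi> B x) x) + Re (cinner (\<Phi> D x) x)) / 3)"
    by (rule popoviciu[OF cv phi_pos[OF npm A] phi_pos[OF npm B] phi_pos[OF npm D]])
  have jA: "g (Re (cinner (\<Phi> A x) x)) \<le> Re (cinner (\<Phi> (cfc g A) x) x)" by (rule jensen[OF A npm gc cv g0 x])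
  have jB: "g (Re (cinner (\<Phi> B x) x)) \<le> Re (cinner (\<Phi> (cfc g B) x) x)" by (rule jensen[OF B npm gc cv g0 x])
  have jD: "g (Re (cinner (\<Phi> D x) x)) \<le> Re (cinner (\<Phi> (cfc g D) x) x)" by (rule jensen[OF D npm gc cv g0 x])
  have "2 * (g ((Re (cinner (\<Phi> A x) x) + Re (cinner (\<Phi> B x) x)) / 2)
                 + g ((Re (cinner (\<Phi> B x) x) + Re (cinner (\<Phi> D x) x)) / 2)
                 + g ((Re (cinner (\<Phi> A x) x) + Re (cinner (\<Phi> D x) x)) / 2))
    \<le> (Re (cinner (\<Phi> (cfc g A) x) x) + Re (cinner (\<Phi> (cfc g B) x) x) + Re (cinner (\<Phi> (cfc g D) x) x))
      + 3 * g ((Re (cinner (\<Phi> A x) x) + Re (cinner (\<Phi> B x) x) + Re (cinner (\<Phi> D x) x)) / 3)"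
    using p jA jB jD by linarith
  then show ?thesis by (rule aux3)
qed

theorem proposition3:
  fixes A B D :: "'a::chilbert \<Rightarrow> 'a"
    and \<Phi> :: "('a \<Rightarrow> 'a) \<Rightarrow> ('b::chilbert \<Rightarrow> 'b)"
    and g :: "real \<Rightarrow> real"
    and x :: 'b
  assumes "pos_op A" and "pos_op B" and "pos_op D"
    and "normalized_positive_map \<Phi>"
    and "continuous_on {0..} g" and "g 0 = 0"
    and "norm x = 1"
  defines "q \<equiv> (\<lambda>S. Re (cinner (\<Phi> S x) x))"
  shows "(convex_on {0..} g \<longrightarrow>
            q (\<lambda>y. (1/3) *\<^sub>R (cfc g A y + cfc g B y + cfc g D y))
              + g (q (\<lambda>y. (1/3) *\<^sub>R (A y + B y + D y)))
            \<ge> (2/3) * (g (q (\<lambda>y. (1/2) *\<^sub>R (A y + B y)))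
                       + g (q (\<lambda>y. (1/2) *\<^sub>R (B y + D y)))
                       + g (q (\<lambda>y. (1/2) *\<^sub>R (A y + D y)))))
       \<and> (concave_on {0..} g \<longrightarrow>
            q (\<lambda>y. (1/3) *\<^sub>R (cfc g A y + cfc g B y + cfc g D y))
              + g (q (\<lambda>y. (1/3) *\<^sub>R (A y + B y + D y)))
            \<le> (2/3) * (g (q (\<lambda>y. (1/2) *\<^sub>R (A y + B y)))
                       + g (q (\<lambda>y. (1/2) *\<^sub>R (B y + D y)))
                       + g (q (\<lambda>y. (1/2) *\<^sub>R (A y + D y)))))"
proof -
  have bcA: "bounded_clinear A" and bcB: "bounded_clinear B" and bcD: "bounded_clinear D"
    using assms(1-3) by (auto simp: pos_op_def)
  note npm = assms(4)
  have cont: "continuous_on {0..onorm S} g" for S :: "'a \<Rightarrow> 'a"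
    using assms(5) by (rule continuous_on_subset) auto
  have bcg: "bounded_clinear (cfc h S)" if "pos_op S" "continuous_on {0..} h" for h S
    using cfc_clinear_sa(1)[OF that(1) continuous_on_subset[OF that(2)]] by auto
  have gA: "bounded_clinear (cfc g A)" by (rule bcg[OF assms(1) assms(5)])
  have gB: "bounded_clinear (cfc g B)" by (rule bcg[OF assms(2) assms(5)])
  have gD: "bounded_clinear (cfc g D)" by (rule bcg[OF assms(3) assms(5)])
  have eAB: "q (\<lambda>y. (1/2) *\<^sub>R (A y + B y)) = (q A + q B) / 2"
    using phi2[OF npm bcA bcB, of "1/2" x] by (simp add: q_def)
  have eBD: "q (\<lambda>y. (1/2) *\<^sub>R (B y + D y)) = (q B + q D) / 2"
    using phi2[OF npm bcB bcD, of "1/2" x] by (simp add: q_def)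
  have eAD: "q (\<lambda>y. (1/2) *\<^sub>R (A y + D y)) = (q A + q D) / 2"
    using phi2[OF npm bcA bcD, of "1/2" x] by (simp add: q_def)
  have eABD: "q (\<lambda>y. (1/3) *\<^sub>R (A y + B y + D y)) = (q A + q B + q D) / 3"
    using phi3[OF npm bcA bcB bcD, of "1/3" x] by (simp add: q_def)
  have eg: "q (\<lambda>y. (1/3) *\<^sub>R (cfc g A y + cfc g B y + cfc g D y)) = (q (cfc g A) + q (cfc g B) + q (cfc g D)) / 3"
    using phi3[OF npm gA gB gD, of "1/3" x] by (simp add: q_def)
  show ?thesis
  proof (intro conjI impI)
    assume cv: "convex_on {0..} g"
    have "(2/3) * (g ((q A + q B) / 2) + g ((q B + q D) / 2) + g ((q A + q D) / 2))
      \<le> (q (cfc g A) + q (cfc g B) + q (cfc g D)) / 3 + g ((q A + q B + q D) / 3)"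
      unfolding q_def by (rule main_convex[OF assms(1-4) assms(5) cv assms(6,7)])
    then show "(2/3) * (g (q (\<lambda>y. (1/2) *\<^sub>R (A y + B y)))
                       + g (q (\<lambda>y. (1/2) *\<^sub>R (B y + D y)))
                       + g (q (\<lambda>y. (1/2) *\<^sub>R (A y + D y))))
          \<le> q (\<lambda>y. (1/3) *\<^sub>R (cfc g A y + cfc g B y + cfc g D y))
              + g (q (\<lambda>y. (1/3) *\<^sub>R (A y + B y + D y)))"
      unfolding eAB eBD eAD eABD eg .
  next
    assume cc: "concave_on {0..} g"
    define h where "h = (\<lambda>t. - g t)"
    have cvh: "convex_on {0..} h" using cc by (simp add: concave_on_def h_def)
    have hc: "continuous_on {0..} h" unfolding h_def using assms(5) by (intro continuous_intros)
    have h0: "h 0 = 0" using assms(6) by (simp add: h_def)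
    have ch: "cfc h S = (\<lambda>y. - cfc g S y)" if "pos_op S" for S :: "'a \<Rightarrow> 'a"
      unfolding h_def by (rule cfc_uminus[OF that cont])
    have qneg: "q (\<lambda>y. - cfc g S y) = - q (cfc g S)" if "pos_op S" for S :: "'a \<Rightarrow> 'a"
      using phi_scaleR[OF npm bcg[OF that assms(5)], of "-1" x] by (simp add: q_def)
    have "(2/3) * (h ((q A + q B) / 2) + h ((q B + q D) / 2) + h ((q A + q D) / 2))
      \<le> (q (cfc h A) + q (cfc h B) + q (cfc h D)) / 3 + h ((q A + q B + q D) / 3)"
      unfolding q_def by (rule main_convex[OF assms(1-4) hc cvh h0 assms(7)])
    then have "(2/3) * (- g ((q A + q B) / 2) + - g ((q B + q D) / 2) + - g ((q A + q D) / 2))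
      \<le> (- q (cfc g A) + - q (cfc g B) + - q (cfc g D)) / 3 + - g ((q A + q B + q D) / 3)"
      unfolding ch[OF assms(1)] ch[OF assms(2)] ch[OF assms(3)] qneg[OF assms(1)] qneg[OF assms(2)] qneg[OF assms(3)]
      by (simp add: h_def)
    then have "(q (cfc g A) + q (cfc g B) + q (cfc g D)) / 3 + g ((q A + q B + q D) / 3)
      \<le> (2/3) * (g ((q A + q B) / 2) + g ((q B + q D) / 2) + g ((q A + q D) / 2))"
      by (simp add: field_simps)
    then show "q (\<lambda>y. (1/3) *\<^sub>R (cfc g A y + cfc g B y + cfc g D y))
              + g (q (\<lambda>y. (1/3) *\<^sub>R (A y + B y + D y)))
            \<le> (2/3) * (g (q (\<lambda>y. (1/2) *\<^sub>R (A y + B y)))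
                       + g (q (\<lambda>y. (1/2) *\<^sub>R (B y + D y)))
                       + g (q (\<lambda>y. (1/2) *\<^sub>R (A y + D y))))"
      unfolding eAB eBD eAD eABD eg .
  qed
qed

end
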